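(* Let $p>2$ be a prime, $H$ the quaternion algebra over $\mathbb Q$ ramified exactly at $p$ and $\infty$, $\mathscr O$ a maximal order in $H$ and $\tilde{\mathscr O}=\{x\in\mathscr O:p\mid\Delta(x)\}$. Let $L\subset\tilde{\mathscr O}$ be a lattice with $[\tilde{\mathscr O}:L]=p$. Then $L$ is an order if and only if $\mathbb Z+p\mathscr O\subset L$.
   Context: $\Delta(x)=\mathrm{tr}(x)^2-4N(x)$ with $N$, $\mathrm{tr}$ reduced norm and trace. $\tilde{\mathscr O}$ is the unique order of index $p$ in $\mathscr O$. *)

theory Defs
  imports Complex_Main "HOL-Computational_Algebra.Primes"
begin

text \<open>Quaternion algebra (a,b)_Q over the rationals, with Q-basis 1, i, j, k = ij,
  i^2 = a, j^2 = b, ij = -ji.  An element x0 + x1 i + x2 j + x3 k is Quat x0 x1 x2 x3.\<close>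

datatype quat = Quat rat rat rat rat

fun qadd :: "quat \<Rightarrow> quat \<Rightarrow> quat" where
  "qadd (Quat x0 x1 x2 x3) (Quat y0 y1 y2 y3) = Quat (x0+y0) (x1+y1) (x2+y2) (x3+y3)"

fun qsmul :: "rat \<Rightarrow> quat \<Rightarrow> quat" where
  "qsmul c (Quat x0 x1 x2 x3) = Quat (c*x0) (c*x1) (c*x2) (c*x3)"

definition qzero :: quat where "qzero = Quat 0 0 0 0"

definition qone :: quat where "qone = Quat 1 0 0 0"

definition qof_int :: "int \<Rightarrow> quat" where "qof_int n = Quat (of_int n) 0 0 0"

fun qmul :: "rat \<Rightarrow> rat \<Rightarrow> quat \<Rightarrow> quat \<Rightarrow> quat" where
  "qmul a b (Quat x0 x1 x2 x3) (Quat y0 y1 y2 y3) =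
     Quat (x0*y0 + a*x1*y1 + b*x2*y2 - a*b*x3*y3)
          (x0*y1 + x1*y0 - b*x2*y3 + b*x3*y2)
          (x0*y2 + x2*y0 + a*x1*y3 - a*x3*y1)
          (x0*y3 + x3*y0 + x1*y2 - x2*y1)"

fun qtr :: "quat \<Rightarrow> rat" where
  "qtr (Quat x0 x1 x2 x3) = 2 * x0"

fun qnorm :: "rat \<Rightarrow> rat \<Rightarrow> quat \<Rightarrow> rat" where
  "qnorm a b (Quat x0 x1 x2 x3) = x0^2 - a*x1^2 - b*x2^2 + a*b*x3^2"

definition qdisc :: "rat \<Rightarrow> rat \<Rightarrow> quat \<Rightarrow> rat" where
  "qdisc a b x = (qtr x)^2 - 4 * qnorm a b x"

text \<open>Ramification.  H = (a,b)_Q is ramified at a place v iff H \<otimes> Q_v is a division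
  algebra iff the reduced norm form is anisotropic over Q_v.\<close>

definition ram_infty :: "rat \<Rightarrow> rat \<Rightarrow> bool" where
  "ram_infty a b \<longleftrightarrow>
     \<not> (\<exists>x0 x1 x2 x3 :: real. (x0 \<noteq> 0 \<or> x1 \<noteq> 0 \<or> x2 \<noteq> 0 \<or> x3 \<noteq> 0) \<and>
          x0^2 - real_of_rat a * x1^2 - real_of_rat b * x2^2
            + real_of_rat a * real_of_rat b * x3^2 = 0)"

definition padic_dvd :: "int \<Rightarrow> nat \<Rightarrow> rat \<Rightarrow> bool" where
  "padic_dvd l n q \<longleftrightarrow> (\<exists>r s :: int. \<not> l dvd s \<and> q = of_int (l^n) * of_int r / of_int s)"

text \<open>The norm form is isotropic over Q_l iff it has a primitive zero in Z_l^4 iff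
  (by compactness of the primitive vectors in Z_l^4 and density of Z in Z_l)
  for every n there is a primitive integer vector whose norm has l-adic valuation \<ge> n.\<close>
definition ram_at :: "rat \<Rightarrow> rat \<Rightarrow> int \<Rightarrow> bool" where
  "ram_at a b l \<longleftrightarrow>
     \<not> (\<forall>n::nat. \<exists>x0 x1 x2 x3 :: int.
            \<not> (l dvd x0 \<and> l dvd x1 \<and> l dvd x2 \<and> l dvd x3) \<and>
            padic_dvd l n (qnorm a b (Quat (of_int x0) (of_int x1) (of_int x2) (of_int x3))))"

definition ramified_exactly_at :: "rat \<Rightarrow> rat \<Rightarrow> int \<Rightarrow> bool" where
  "ramified_exactly_at a b p \<longleftrightarrow>
     a \<noteq> 0 \<and> b \<noteq> 0 \<and> ram_infty a b \<and> (\<forall>l::int. prime l \<longrightarrow> (ram_at a b l \<longleftrightarrow> l = p))"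

definition qcomb :: "quat \<Rightarrow> quat \<Rightarrow> quat \<Rightarrow> quat \<Rightarrow> rat \<Rightarrow> rat \<Rightarrow> rat \<Rightarrow> rat \<Rightarrow> quat" where
  "qcomb v0 v1 v2 v3 c0 c1 c2 c3 =
     qadd (qadd (qsmul c0 v0) (qsmul c1 v1)) (qadd (qsmul c2 v2) (qsmul c3 v3))"

definition qindep :: "quat \<Rightarrow> quat \<Rightarrow> quat \<Rightarrow> quat \<Rightarrow> bool" where
  "qindep v0 v1 v2 v3 \<longleftrightarrow>
     (\<forall>c0 c1 c2 c3. qcomb v0 v1 v2 v3 c0 c1 c2 c3 = qzero \<longrightarrow>
        c0 = 0 \<and> c1 = 0 \<and> c2 = 0 \<and> c3 = 0)"

definition is_lattice :: "quat set \<Rightarrow> bool" where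
  "is_lattice L \<longleftrightarrow> (\<exists>v0 v1 v2 v3. qindep v0 v1 v2 v3 \<and>
     L = {qcomb v0 v1 v2 v3 (of_int n0) (of_int n1) (of_int n2) (of_int n3) | n0 n1 n2 n3. True})"

definition is_order :: "rat \<Rightarrow> rat \<Rightarrow> quat set \<Rightarrow> bool" where
  "is_order a b R \<longleftrightarrow> is_lattice R \<and> qone \<in> R \<and> (\<forall>x\<in>R. \<forall>y\<in>R. qmul a b x y \<in> R)"

definition is_maximal_order :: "rat \<Rightarrow> rat \<Rightarrow> quat set \<Rightarrow> bool" where
  "is_maximal_order a b R \<longleftrightarrow> is_order a b R \<and> (\<forall>R'. is_order a b R' \<and> R \<subseteq> R' \<longrightarrow> R' = R)"

definition tilde_order :: "rat \<Rightarrow> rat \<Rightarrow> int \<Rightarrow> quat set \<Rightarrow> quat set" where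
  "tilde_order a b p R = {x \<in> R. \<exists>k::int. qdisc a b x = of_int p * of_int k}"

definition lattice_index :: "quat set \<Rightarrow> quat set \<Rightarrow> nat" where
  "lattice_index M L = card ((\<lambda>x. (\<lambda>y. qadd x y) ` L) ` M)"

end

theory Submission
  imports Defs "Jordan_Normal_Form.Determinant"
begin

instantiation quat :: ab_group_add
begin
definition zero_quat_def: "0 = qzero"
definition plus_quat_def: "x + y = qadd x y"
fun uminus_quat :: "quat \<Rightarrow> quat" where "uminus_quat (Quat x0 x1 x2 x3) = Quat (-x0) (-x1) (-x2) (-x3)"
definition minus_quat_def: "(x::quat) - y = x + (- y)"
instance
proof
  fix x y z :: quat
  show "x + y + z = x + (y + z)" by (cases x; cases y; cases z) (simp add: plus_quat_def algebra_simps)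
  show "x + y = y + x" by (cases x; cases y) (simp add: plus_quat_def algebra_simps)
  show "0 + x = x" by (cases x) (simp add: plus_quat_def zero_quat_def qzero_def)
  show "- x + x = 0" by (cases x) (simp add: plus_quat_def zero_quat_def qzero_def)
  show "x - y = x + - y" by (simp add: minus_quat_def)
qed
end

lemma quat_plus [simp]: "Quat x0 x1 x2 x3 + Quat y0 y1 y2 y3 = Quat (x0+y0) (x1+y1) (x2+y2) (x3+y3)"
  by (simp add: plus_quat_def)
lemma quat_minus [simp]: "Quat x0 x1 x2 x3 - Quat y0 y1 y2 y3 = Quat (x0-y0) (x1-y1) (x2-y2) (x3-y3)"
  by (simp add: minus_quat_def)
lemma quat_zero: "(0::quat) = Quat 0 0 0 0" by (simp add: zero_quat_def qzero_def)
lemma qadd_eq: "qadd x y = x + y" by (simp add: plus_quat_def)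
lemma qzero_eq: "qzero = 0" by (simp add: zero_quat_def)

definition qof :: "rat \<Rightarrow> quat" where "qof r = Quat r 0 0 0"
fun qconj :: "quat \<Rightarrow> quat" where "qconj (Quat x0 x1 x2 x3) = Quat x0 (-x1) (-x2) (-x3)"

lemma qof_int_eq: "qof_int n = qof (of_int n)" by (simp add: qof_int_def qof_def)
lemma qone_eq: "qone = qof 1" by (simp add: qone_def qof_def)

lemma qof_add: "qof (r + s) = qof r + qof s" by (simp add: qof_def)
lemma qof_diff: "qof (r - s) = qof r - qof s" by (simp add: qof_def)
lemma qof_0: "qof 0 = 0" by (simp add: qof_def quat_zero)

lemma qsmul_add: "qsmul c (x + y) = qsmul c x + qsmul c y"
  by (cases x; cases y) (simp add: algebra_simps)
lemma qsmul_diff: "qsmul c (x - y) = qsmul c x - qsmul c y"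
  by (cases x; cases y) (simp add: algebra_simps)
lemma qsmul_add2: "qsmul (c + d) x = qsmul c x + qsmul d x"
  by (cases x) (simp add: algebra_simps)
lemma qsmul_diff2: "qsmul (c - d) x = qsmul c x - qsmul d x"
  by (cases x) (simp add: algebra_simps)
lemma qsmul_smul: "qsmul c (qsmul d x) = qsmul (c * d) x"
  by (cases x) (simp add: algebra_simps)
lemma qsmul_1: "qsmul 1 x = x" by (cases x) simp
lemma qsmul_0: "qsmul 0 x = 0" by (cases x) (simp add: quat_zero)
lemma qsmul_zero: "qsmul c 0 = 0" by (simp add: quat_zero)
lemma qsmul_neg: "qsmul c (- x) = - qsmul c x" by (cases x) simp
lemma qsmul_neg2: "qsmul (- c) x = - qsmul c x" by (cases x) simp
lemma qsmul_qof: "qsmul c (qof r) = qof (c * r)" by (simp add: qof_def)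

context fixes a b :: rat
begin

lemma qmul_assoc: "qmul a b (qmul a b x y) z = qmul a b x (qmul a b y z)"
  by (cases x; cases y; cases z) (simp add: algebra_simps)
lemma qmul_add_left: "qmul a b (x + y) z = qmul a b x z + qmul a b y z"
  by (cases x; cases y; cases z) (simp add: algebra_simps)
lemma qmul_add_right: "qmul a b x (y + z) = qmul a b x y + qmul a b x z"
  by (cases x; cases y; cases z) (simp add: algebra_simps)
lemma qmul_diff_left: "qmul a b (x - y) z = qmul a b x z - qmul a b y z"
  by (cases x; cases y; cases z) (simp add: algebra_simps)
lemma qmul_diff_right: "qmul a b x (y - z) = qmul a b x y - qmul a b x z"
  by (cases x; cases y; cases z) (simp add: algebra_simps)
lemma qmul_neg_left: "qmul a b (- x) z = - qmul a b x z"
  by (cases x; cases z) (simp add: algebra_simps)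
lemma qmul_neg_right: "qmul a b x (- z) = - qmul a b x z"
  by (cases x; cases z) (simp add: algebra_simps)
lemma qmul_smul_left: "qmul a b (qsmul c x) z = qsmul c (qmul a b x z)"
  by (cases x; cases z) (simp add: algebra_simps)
lemma qmul_smul_right: "qmul a b x (qsmul c z) = qsmul c (qmul a b x z)"
  by (cases x; cases z) (simp add: algebra_simps)
lemma qmul_qof_left: "qmul a b (qof r) z = qsmul r z"
  by (cases z) (simp add: qof_def)
lemma qmul_qof_right: "qmul a b z (qof r) = qsmul r z"
  by (cases z) (simp add: qof_def algebra_simps)
lemma qmul_zero_left: "qmul a b 0 z = 0"
  by (cases z) (simp add: quat_zero)
lemma qmul_zero_right: "qmul a b z 0 = 0"
  by (cases z) (simp add: quat_zero)

lemma qnorm_mult: "qnorm a b (qmul a b x y) = qnorm a b x * qnorm a b y"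
  by (cases x; cases y) (simp add: algebra_simps power2_eq_square)
lemma qtr_add: "qtr (x + y) = qtr x + qtr y"
  by (cases x; cases y) (simp add: algebra_simps)
lemma qtr_diff: "qtr (x - y) = qtr x - qtr y"
  by (cases x; cases y) (simp add: algebra_simps)
lemma qtr_neg: "qtr (- x) = - qtr x" by (cases x) simp
lemma qtr_smul: "qtr (qsmul c x) = c * qtr x" by (cases x) simp
lemma qtr_qof: "qtr (qof r) = 2 * r" by (simp add: qof_def)
lemma qnorm_smul: "qnorm a b (qsmul c x) = c^2 * qnorm a b x"
  by (cases x) (simp add: algebra_simps power2_eq_square)
lemma qnorm_neg: "qnorm a b (- x) = qnorm a b x"
  by (cases x) (simp add: algebra_simps power2_eq_square)
lemma qnorm_qof: "qnorm a b (qof r) = r^2" by (simp add: qof_def)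
lemma qnorm_add: "qnorm a b (x + y) = qnorm a b x + qnorm a b y + qtr (qmul a b x (qconj y))"
  by (cases x; cases y) (simp add: algebra_simps power2_eq_square)
lemma qnorm_diff_qof: "qnorm a b (x - qof r) = r^2 - r * qtr x + qnorm a b x"
  by (cases x) (simp add: qof_def algebra_simps power2_eq_square)
lemma qnorm_add_qof: "qnorm a b (x + qof r) = r^2 + r * qtr x + qnorm a b x"
  by (cases x) (simp add: qof_def algebra_simps power2_eq_square)
lemma qmul_conj: "qmul a b x (qconj x) = qof (qnorm a b x)"
  by (cases x) (simp add: qof_def algebra_simps power2_eq_square)
lemma qconj_eq: "qconj x = qof (qtr x) - x"
  by (cases x) (simp add: qof_def)
lemma qmul_sq: "qmul a b x x = qsmul (qtr x) x - qof (qnorm a b x)"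
  by (cases x) (simp add: qof_def algebra_simps power2_eq_square)
lemma qdisc_diff_qof: "qdisc a b (x - qof r) = qdisc a b x"
  by (cases x) (simp add: qdisc_def qof_def algebra_simps power2_eq_square)
lemma qdisc_smul: "qdisc a b (qsmul c x) = c^2 * qdisc a b x"
  by (cases x) (simp add: qdisc_def algebra_simps power2_eq_square)
lemma qtr_mul_comm: "qtr (qmul a b x y) = qtr (qmul a b y x)"
  by (cases x; cases y) (simp add: algebra_simps)
end

fun qc :: "quat \<Rightarrow> nat \<Rightarrow> rat" where
  "qc (Quat x0 x1 x2 x3) i = (if i = 0 then x0 else if i = 1 then x1 else if i = 2 then x2 else x3)"

lemma quat_eq_qc: "x = y \<longleftrightarrow> (\<forall>i<4. qc x i = qc y i)"
proof
  assume "\<forall>i<4. qc x i = qc y i"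
  then have "qc x 0 = qc y 0" "qc x 1 = qc y 1" "qc x 2 = qc y 2" "qc x 3 = qc y 3" by auto
  then show "x = y" by (cases x; cases y) auto
qed simp

lemma qc_qcomb: "i < 4 \<Longrightarrow> qc (qcomb v0 v1 v2 v3 c0 c1 c2 c3) i = c0 * qc v0 i + c1 * qc v1 i + c2 * qc v2 i + c3 * qc v3 i"
  by (cases v0; cases v1; cases v2; cases v3) (auto simp: qcomb_def qadd_eq)

lemma sum4: "(\<Sum>j<4::nat. f j) = f 0 + f 1 + f 2 + (f 3 :: 'a::comm_monoid_add)"
  by (simp add: eval_nat_numeral add.assoc)

definition toV :: "quat \<Rightarrow> rat vec" where "toV x = vec 4 (qc x)"

lemma qindep_span:
  assumes "qindep v0 v1 v2 v3"
  shows "\<exists>c0 c1 c2 c3. y = qcomb v0 v1 v2 v3 c0 c1 c2 c3"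
proof -
  define vv where "vv = (\<lambda>j::nat. [v0,v1,v2,v3] ! j)"
  define A where "A = mat 4 4 (\<lambda>(i,j). qc (vv j) i)"
  have Ac: "A \<in> carrier_mat 4 4" by (simp add: A_def)
  have mv: "(A *\<^sub>v c) $ i = qc (qcomb v0 v1 v2 v3 (c$0) (c$1) (c$2) (c$3)) i"
    if "i < 4" "c \<in> carrier_vec 4" for c i
    using that by (simp add: A_def qc_qcomb scalar_prod_def atLeast0LessThan sum4 vv_def row_def algebra_simps)
  have "det A \<noteq> 0"
  proof
    assume "det A = 0"
    then obtain c where c: "c \<in> carrier_vec 4" "c \<noteq> 0\<^sub>v 4" "A *\<^sub>v c = 0\<^sub>v 4"
      using det_0_iff_vec_prod_zero_field[OF Ac] by auto
    have "qcomb v0 v1 v2 v3 (c$0) (c$1) (c$2) (c$3) = qzero"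
      unfolding qzero_eq quat_eq_qc
    proof (intro allI impI)
      fix i :: nat assume i: "i < 4"
      have "(A *\<^sub>v c) $ i = 0" using c(3) i by simp
      then show "qc (qcomb v0 v1 v2 v3 (c$0) (c$1) (c$2) (c$3)) i = qc 0 i"
        using mv[OF i c(1)] by (simp add: quat_zero)
    qed
    then have "c$0 = 0" "c$1 = 0" "c$2 = 0" "c$3 = 0" using assms unfolding qindep_def by blast+
    then have "c = 0\<^sub>v 4"
      using c(1) by (intro eq_vecI) (auto simp: less_Suc_eq numeral_eq_Suc)
    with c(2) show False by simp
  qed
  then have "A \<in> Units (ring_mat TYPE(rat) 4 ())" using det_non_zero_imp_unit[OF Ac, of "()"] by blast
  then obtain B where B: "B \<in> carrier_mat 4 4" "A * B = 1\<^sub>m 4"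
    unfolding Units_def ring_mat_def by auto
  define c where "c = B *\<^sub>v toV y"
  have cc: "c \<in> carrier_vec 4" using B(1) by (simp add: c_def toV_def carrier_vecI)
  have "A *\<^sub>v c = toV y"
  proof -
    have "A *\<^sub>v (B *\<^sub>v toV y) = (A * B) *\<^sub>v toV y"
      using B Ac by (intro assoc_mult_mat_vec[symmetric]) (auto simp: toV_def)
    also have "\<dots> = toV y" using B by (simp add: toV_def)
    finally show ?thesis by (simp add: c_def)
  qed
  then have "y = qcomb v0 v1 v2 v3 (c$0) (c$1) (c$2) (c$3)"
    unfolding quat_eq_qc using mv[OF _ cc] by (auto simp: toV_def)
  then show ?thesis by blast
qed

definition lat :: "quat \<Rightarrow> quat \<Rightarrow> quat \<Rightarrow> quat \<Rightarrow> quat set" where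
  "lat v0 v1 v2 v3 = {qcomb v0 v1 v2 v3 (of_int n0) (of_int n1) (of_int n2) (of_int n3) | n0 n1 n2 n3. True}"

lemma is_lattice_iff: "is_lattice L \<longleftrightarrow> (\<exists>v0 v1 v2 v3. qindep v0 v1 v2 v3 \<and> L = lat v0 v1 v2 v3)"
  by (simp add: is_lattice_def lat_def)

lemma qcomb_add: "qcomb v0 v1 v2 v3 c0 c1 c2 c3 + qcomb v0 v1 v2 v3 d0 d1 d2 d3 =
   qcomb v0 v1 v2 v3 (c0+d0) (c1+d1) (c2+d2) (c3+d3)"
  by (simp add: qcomb_def qadd_eq qsmul_add2 algebra_simps)
lemma qcomb_neg: "- qcomb v0 v1 v2 v3 c0 c1 c2 c3 = qcomb v0 v1 v2 v3 (-c0) (-c1) (-c2) (-c3)"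
  by (simp add: qcomb_def qadd_eq qsmul_neg2 algebra_simps)
lemma qcomb_smul: "qsmul k (qcomb v0 v1 v2 v3 c0 c1 c2 c3) = qcomb v0 v1 v2 v3 (k*c0) (k*c1) (k*c2) (k*c3)"
  by (simp add: qcomb_def qadd_eq qsmul_add qsmul_smul)
lemma qcomb_0: "qcomb v0 v1 v2 v3 0 0 0 0 = 0"
  by (simp add: qcomb_def qadd_eq qsmul_0)

lemma lat_memI: "c0 \<in> \<int> \<Longrightarrow> c1 \<in> \<int> \<Longrightarrow> c2 \<in> \<int> \<Longrightarrow> c3 \<in> \<int> \<Longrightarrow> qcomb v0 v1 v2 v3 c0 c1 c2 c3 \<in> lat v0 v1 v2 v3"
  unfolding lat_def by (auto elim!: Ints_cases)
lemma lat_E: assumes "x \<in> lat v0 v1 v2 v3"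
  obtains n0 n1 n2 n3 :: int where "x = qcomb v0 v1 v2 v3 (of_int n0) (of_int n1) (of_int n2) (of_int n3)"
  using assms unfolding lat_def by blast
lemma lat_0: "0 \<in> lat v0 v1 v2 v3"
  using lat_memI[of 0 0 0 0 v0 v1 v2 v3] by (simp add: qcomb_0)
lemma lat_add: assumes "x \<in> lat v0 v1 v2 v3" "y \<in> lat v0 v1 v2 v3" shows "x + y \<in> lat v0 v1 v2 v3"
proof -
  obtain n0 n1 n2 n3 :: int where x: "x = qcomb v0 v1 v2 v3 (of_int n0) (of_int n1) (of_int n2) (of_int n3)" using assms(1) by (rule lat_E)
  obtain m0 m1 m2 m3 :: int where y: "y = qcomb v0 v1 v2 v3 (of_int m0) (of_int m1) (of_int m2) (of_int m3)" using assms(2) by (rule lat_E)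
  show ?thesis unfolding x y qcomb_add by (rule lat_memI) auto
qed
lemma lat_smul: assumes "x \<in> lat v0 v1 v2 v3" shows "qsmul (of_int k) x \<in> lat v0 v1 v2 v3"
proof -
  obtain n0 n1 n2 n3 :: int where x: "x = qcomb v0 v1 v2 v3 (of_int n0) (of_int n1) (of_int n2) (of_int n3)" using assms(1) by (rule lat_E)
  show ?thesis unfolding x qcomb_smul by (rule lat_memI) auto
qed
lemma lat_neg: assumes "x \<in> lat v0 v1 v2 v3" shows "- x \<in> lat v0 v1 v2 v3"
  using lat_smul[OF assms, of "-1"] by (simp add: qsmul_neg2 qsmul_1)

context fixes L assumes L: "is_lattice L"
begin
lemma latt_0: "0 \<in> L"
proof - obtain v0 v1 v2 v3 where "L = lat v0 v1 v2 v3" using L unfolding is_lattice_iff by blast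
  then show ?thesis using lat_0 by simp qed
lemma latt_add: "x \<in> L \<Longrightarrow> y \<in> L \<Longrightarrow> x + y \<in> L"
proof - obtain v0 v1 v2 v3 where "L = lat v0 v1 v2 v3" using L unfolding is_lattice_iff by blast
  then show "x \<in> L \<Longrightarrow> y \<in> L \<Longrightarrow> x + y \<in> L" using lat_add by simp qed
lemma latt_smul: "x \<in> L \<Longrightarrow> qsmul (of_int k) x \<in> L"
proof - obtain v0 v1 v2 v3 where "L = lat v0 v1 v2 v3" using L unfolding is_lattice_iff by blast
  then show "x \<in> L \<Longrightarrow> qsmul (of_int k) x \<in> L" using lat_smul by simp qed
lemma latt_neg: "x \<in> L \<Longrightarrow> - x \<in> L"
  using latt_smul[of x "-1"] by (simp add: qsmul_neg2 qsmul_1)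
lemma latt_diff: "x \<in> L \<Longrightarrow> y \<in> L \<Longrightarrow> x - y \<in> L"
  using latt_add[of x "- y"] latt_neg[of y] by (simp only: diff_conv_add_uminus)
lemma latt_sum: "finite A \<Longrightarrow> (\<And>x. x \<in> A \<Longrightarrow> f x \<in> L) \<Longrightarrow> sum f A \<in> L"
proof (induction A rule: finite_induct)
  case empty then show ?case using latt_0 by simp
next
  case (insert x F) then show ?case using latt_add by simp
qed
end

lemma common_denom: fixes qs :: "rat list" shows "\<exists>d::int. d > 0 \<and> (\<forall>q\<in>set qs. of_int d * q \<in> \<int>)"
proof (induction qs)
  case Nil then show ?case by (intro exI[of _ 1]) auto
next
  case (Cons q qs)
  then obtain d where d: "d > 0" "\<forall>q\<in>set qs. of_int d * q \<in> \<int>" by blast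
  obtain r s where rs: "quotient_of q = (r, s)" by (cases "quotient_of q")
  then have s: "s > 0" "q = of_int r / of_int s" using quotient_of_denom_pos quotient_of_div by blast+
  have "of_int (d*s) * q = of_int (d * r)" using s by (simp add: field_simps)
  then have "of_int (d*s) * q \<in> \<int>" by (metis Ints_of_int)
  moreover have "of_int (d*s) * x \<in> \<int>" if "x \<in> set qs" for x
  proof -
    have "of_int (d*s) * x = of_int s * (of_int d * x)" by simp
    then show ?thesis using d(2) that by (metis Ints_mult Ints_of_int)
  qed
  ultimately have "\<forall>x\<in>set (q # qs). of_int (d*s) * x \<in> \<int>" by auto
  moreover have "d * s > 0" using d(1) s(1) by simp
  ultimately show ?case by blast
qed

lemma quat_decomp: "X = qsmul (qc X 0) (Quat 1 0 0 0) + qsmul (qc X 1) (Quat 0 1 0 0) + qsmul (qc X 2) (Quat 0 0 1 0) + qsmul (qc X 3) (Quat 0 0 0 1)"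
  by (cases X) simp

lemma lat_contains_scaled:
  assumes "qindep v0 v1 v2 v3"
  shows "\<exists>D::int. D > 0 \<and> (\<forall>X. (\<forall>i<4. qc X i \<in> \<int>) \<longrightarrow> qsmul (of_int D) X \<in> lat v0 v1 v2 v3)"
proof -
  obtain c00 c01 c02 c03 where e0: "Quat 1 0 0 0 = qcomb v0 v1 v2 v3 c00 c01 c02 c03" using qindep_span[OF assms] by blast
  obtain c10 c11 c12 c13 where e1: "Quat 0 1 0 0 = qcomb v0 v1 v2 v3 c10 c11 c12 c13" using qindep_span[OF assms] by blast
  obtain c20 c21 c22 c23 where e2: "Quat 0 0 1 0 = qcomb v0 v1 v2 v3 c20 c21 c22 c23" using qindep_span[OF assms] by blast
  obtain c30 c31 c32 c33 where e3: "Quat 0 0 0 1 = qcomb v0 v1 v2 v3 c30 c31 c32 c33" using qindep_span[OF assms] by blast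
  obtain D where D: "D > 0" "\<forall>q\<in>set [c00,c01,c02,c03,c10,c11,c12,c13,c20,c21,c22,c23,c30,c31,c32,c33]. of_int D * q \<in> \<int>"
    using common_denom by blast
  have E0: "qsmul (of_int D) (Quat 1 0 0 0) \<in> lat v0 v1 v2 v3" unfolding e0 qcomb_smul using D(2) by (intro lat_memI) auto
  have E1: "qsmul (of_int D) (Quat 0 1 0 0) \<in> lat v0 v1 v2 v3" unfolding e1 qcomb_smul using D(2) by (intro lat_memI) auto
  have E2: "qsmul (of_int D) (Quat 0 0 1 0) \<in> lat v0 v1 v2 v3" unfolding e2 qcomb_smul using D(2) by (intro lat_memI) auto
  have E3: "qsmul (of_int D) (Quat 0 0 0 1) \<in> lat v0 v1 v2 v3" unfolding e3 qcomb_smul using D(2) by (intro lat_memI) auto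
  have "qsmul (of_int D) X \<in> lat v0 v1 v2 v3" if X: "\<forall>i<4. qc X i \<in> \<int>" for X
  proof -
    have ints: "qc X 0 \<in> \<int>" "qc X 1 \<in> \<int>" "qc X 2 \<in> \<int>" "qc X 3 \<in> \<int>" using X by auto
    have "qsmul (of_int D) X = qsmul (qc X 0) (qsmul (of_int D) (Quat 1 0 0 0)) + qsmul (qc X 1) (qsmul (of_int D) (Quat 0 1 0 0))
        + qsmul (qc X 2) (qsmul (of_int D) (Quat 0 0 1 0)) + qsmul (qc X 3) (qsmul (of_int D) (Quat 0 0 0 1))"
      by (subst quat_decomp[of X]) (simp add: qsmul_add qsmul_smul mult.commute)
    also have "\<dots> \<in> lat v0 v1 v2 v3"
    proof -
      obtain z0 z1 z2 z3 where z: "qc X 0 = of_int z0" "qc X 1 = of_int z1" "qc X 2 = of_int z2" "qc X 3 = of_int z3"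
        using ints by (auto elim!: Ints_cases)
      show ?thesis unfolding z by (intro lat_add lat_smul E0 E1 E2 E3)
    qed
    finally show ?thesis .
  qed
  then show ?thesis using D(1) by blast
qed

lemma lat_denom:
  "\<exists>D::int. D > 0 \<and> (\<forall>x\<in>lat v0 v1 v2 v3. \<forall>i<4. of_int D * qc x i \<in> \<int>)"
proof -
  obtain D where D: "D > 0" "\<forall>q\<in>set [qc v0 0, qc v0 1, qc v0 2, qc v0 3, qc v1 0, qc v1 1, qc v1 2, qc v1 3,
      qc v2 0, qc v2 1, qc v2 2, qc v2 3, qc v3 0, qc v3 1, qc v3 2, qc v3 3]. of_int D * q \<in> \<int>"
    using common_denom by blast
  have "of_int D * qc v i \<in> \<int>" if "v \<in> {v0,v1,v2,v3}" "i < 4" for v i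
    using that D(2) by (auto simp: less_Suc_eq numeral_eq_Suc)
  then have v: "of_int D * qc v0 i \<in> \<int>" "of_int D * qc v1 i \<in> \<int>" "of_int D * qc v2 i \<in> \<int>" "of_int D * qc v3 i \<in> \<int>" if "i < 4" for i
    using that by auto
  have "of_int D * qc x i \<in> \<int>" if xin: "x \<in> lat v0 v1 v2 v3" and i4: "i < 4" for x i
  proof -
    obtain n0 n1 n2 n3 :: int where x: "x = qcomb v0 v1 v2 v3 (of_int n0) (of_int n1) (of_int n2) (of_int n3)" using xin by (rule lat_E)
    have "of_int D * qc x i = of_int n0 * (of_int D * qc v0 i) + of_int n1 * (of_int D * qc v1 i) + of_int n2 * (of_int D * qc v2 i) + of_int n3 * (of_int D * qc v3 i)"
      unfolding x qc_qcomb[OF i4] by (simp add: algebra_simps)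
    also have "\<dots> \<in> \<int>" using v[OF i4] by (meson Ints_add Ints_mult Ints_of_int)
    finally show ?thesis .
  qed
  then show ?thesis using D(1) by blast
qed

lemma qcomb_unique:
  assumes "qindep v0 v1 v2 v3" "qcomb v0 v1 v2 v3 c0 c1 c2 c3 = qcomb v0 v1 v2 v3 d0 d1 d2 d3"
  shows "c0 = d0 \<and> c1 = d1 \<and> c2 = d2 \<and> c3 = d3"
proof -
  have "qcomb v0 v1 v2 v3 (c0-d0) (c1-d1) (c2-d2) (c3-d3) = qcomb v0 v1 v2 v3 c0 c1 c2 c3 + - qcomb v0 v1 v2 v3 d0 d1 d2 d3"
    unfolding qcomb_neg qcomb_add by simp
  also have "\<dots> = qzero" using assms(2) by (simp add: qzero_eq)
  finally have "qcomb v0 v1 v2 v3 (c0-d0) (c1-d1) (c2-d2) (c3-d3) = qzero" .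
  then show ?thesis using assms(1) unfolding qindep_def by fastforce
qed

context fixes p :: int assumes pp: "prime p"
begin

lemma p_nunit: "\<not> p dvd 1" using pp not_prime_unit by blast
lemma p_pos: "p > 0" using pp prime_gt_0_int by blast
lemma p_gt1: "p > 1" using pp prime_gt_1_int by blast

lemma ndvd_mult: "\<not> p dvd s1 \<Longrightarrow> \<not> p dvd s2 \<Longrightarrow> \<not> p dvd (s1 * s2)"
  using pp by (simp add: prime_dvd_mult_iff)

lemma decomp: "(x::int) \<noteq> 0 \<Longrightarrow> \<exists>k y. x = p^k * y \<and> \<not> p dvd y"
  using multiplicity_decompose'[of x p] pp not_prime_unit by metis

lemma pd_intro: "\<not> p dvd s \<Longrightarrow> q = of_int (p^n) * of_int r / of_int s \<Longrightarrow> padic_dvd p n q"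
  unfolding padic_dvd_def by blast

lemma pd_int: "p^n dvd k \<Longrightarrow> padic_dvd p n (of_int k)"
proof -
  assume "p^n dvd k" then obtain r where "k = p^n * r" by (auto elim: dvdE)
  then show ?thesis using p_nunit by (intro pd_intro[of 1 _ _ r]) auto
qed

lemma pd_0: "padic_dvd p n 0" using pd_int[of n 0] by simp
lemma pd_Z: "x \<in> \<int> \<Longrightarrow> padic_dvd p 0 x" using pd_int[of 0] by (auto elim!: Ints_cases)

lemma pd_add: assumes "padic_dvd p n x" "padic_dvd p n y" shows "padic_dvd p n (x + y)"
proof -
  obtain r1 s1 where 1: "\<not> p dvd s1" "x = of_int (p^n) * of_int r1 / of_int s1" using assms(1) unfolding padic_dvd_def by blast
  obtain r2 s2 where 2: "\<not> p dvd s2" "y = of_int (p^n) * of_int r2 / of_int s2" using assms(2) unfolding padic_dvd_def by blast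
  have s: "s1 \<noteq> 0" "s2 \<noteq> 0" using 1 2 by auto
  have "x + y = of_int (p^n) * of_int (r1*s2 + r2*s1) / of_int (s1*s2)"
    using 1 2 s by (simp add: field_simps)
  then show ?thesis using ndvd_mult[OF 1(1) 2(1)] by (rule pd_intro[rotated])
qed

lemma pd_smul: assumes "padic_dvd p n x" shows "padic_dvd p n (of_int k * x)"
proof -
  obtain r1 s1 where 1: "\<not> p dvd s1" "x = of_int (p^n) * of_int r1 / of_int s1" using assms(1) unfolding padic_dvd_def by blast
  have "of_int k * x = of_int (p^n) * of_int (k*r1) / of_int s1" using 1 by simp
  then show ?thesis using 1(1) by (rule pd_intro[rotated])
qed

lemma pd_neg: "padic_dvd p n x \<Longrightarrow> padic_dvd p n (- x)" using pd_smul[of n x "-1"] by simp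
lemma pd_diff: "padic_dvd p n x \<Longrightarrow> padic_dvd p n y \<Longrightarrow> padic_dvd p n (x - y)"
  using pd_add[of n x "-y"] pd_neg[of n y] by simp

lemma pd_mult: assumes "padic_dvd p m x" "padic_dvd p n y" shows "padic_dvd p (m+n) (x * y)"
proof -
  obtain r1 s1 where 1: "\<not> p dvd s1" "x = of_int (p^m) * of_int r1 / of_int s1" using assms(1) unfolding padic_dvd_def by blast
  obtain r2 s2 where 2: "\<not> p dvd s2" "y = of_int (p^n) * of_int r2 / of_int s2" using assms(2) unfolding padic_dvd_def by blast
  have "x * y = of_int (p^(m+n)) * of_int (r1*r2) / of_int (s1*s2)"
    using 1 2 by (simp add: power_add)
  then show ?thesis using ndvd_mult[OF 1(1) 2(1)] by (rule pd_intro[rotated])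
qed

lemma pd_mono: assumes "m \<le> n" "padic_dvd p n x" shows "padic_dvd p m x"
proof -
  obtain r1 s1 where 1: "\<not> p dvd s1" "x = of_int (p^n) * of_int r1 / of_int s1" using assms(2) unfolding padic_dvd_def by blast
  have "p^n = p^m * p^(n-m)" using assms(1) by (simp add: power_add[symmetric])
  then have "x = of_int (p^m) * of_int (p^(n-m) * r1) / of_int s1" using 1 by simp
  then show ?thesis using 1(1) by (rule pd_intro[rotated])
qed

lemma pd_shift: assumes "padic_dvd p (n+E) (of_int (p^E) * x)" shows "padic_dvd p n x"
proof -
  obtain r1 s1 where 1: "\<not> p dvd s1" "of_int (p^E) * x = of_int (p^(n+E)) * of_int r1 / of_int s1" using assms unfolding padic_dvd_def by blast
  have "(of_int (p^E) :: rat) \<noteq> 0" using p_pos by simp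
  moreover have "of_int (p^E) * x = of_int (p^E) * (of_int (p^n) * of_int r1 / of_int s1)" using 1(2) by (simp add: power_add algebra_simps)
  ultimately have "x = of_int (p^n) * of_int r1 / of_int s1" by (metis mult_left_cancel)
  then show ?thesis using 1(1) by (rule pd_intro[rotated])
qed

lemma pd_shift2: "padic_dvd p n x \<Longrightarrow> padic_dvd p (n+E) (of_int (p^E) * x)"
  using pd_mult[of n x E "of_int (p^E)"] pd_int[of E "p^E"] by (simp add: mult.commute add.commute)

lemma pd_exact: fixes q :: rat
  assumes "q \<noteq> 0"
  shows "\<exists>k m r s. \<not> p dvd r \<and> \<not> p dvd s \<and> q * of_int (p^m * s) = of_int (p^k * r)"
proof -
  obtain r s where rs: "quotient_of q = (r, s)" by (cases "quotient_of q")
  then have s: "s > 0" "q = of_int r / of_int s" using quotient_of_denom_pos quotient_of_div by blast+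
  have r0: "r \<noteq> 0" using s assms by auto
  obtain k r' where r: "r = p^k * r'" "\<not> p dvd r'" using decomp[OF r0] by blast
  obtain m s' where s': "s = p^m * s'" "\<not> p dvd s'" using decomp[of s] s(1) by auto
  have "q * of_int s = of_int r" using s by simp
  then have "q * of_int (p^m * s') = of_int (p^k * r')" using r s' by simp
  then show ?thesis using r s' by blast
qed

lemma pd_exact_le: fixes q :: rat
  assumes "\<not> p dvd r" "\<not> p dvd s" "q * of_int (p^m * s) = of_int (p^k * r)" "padic_dvd p n q"
  shows "n + m \<le> k"
proof (rule ccontr)
  assume ne: "\<not> n + m \<le> k"
  obtain r1 s1 where 1: "\<not> p dvd s1" "q = of_int (p^n) * of_int r1 / of_int s1" using assms(4) unfolding padic_dvd_def by blast
  have s0: "s1 \<noteq> 0" using 1 by auto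
  have "of_int (p^n * r1 * (p^m * s)) = (of_int (p^k * r * s1) :: rat)"
    using assms(3) 1(2) s0 by (simp add: field_simps)
  then have eq: "p^n * r1 * (p^m * s) = p^k * r * s1" by (simp only: of_int_eq_iff)
  define d where "d = n + m - k"
  have d: "d > 0" "n + m = k + d" using ne by (auto simp: d_def)
  have pk: "p^n * p^m = p^k * p^d" using d(2) by (simp add: power_add[symmetric])
  have "p^k * (p^d * r1 * s) = (p^n * p^m) * r1 * s" unfolding pk by (simp add: algebra_simps)
  also have "\<dots> = p^k * (r * s1)" using eq by (simp add: algebra_simps)
  finally have "p^k * (p^d * r1 * s) = p^k * (r * s1)" .
  then have "p^d * r1 * s = r * s1" using p_pos by simp
  then have "p dvd r * s1" using d(1) by (metis dvd_mult2 dvd_power dvd_triv_left mult.assoc)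
  then show False using ndvd_mult[OF assms(1) 1(1)] by simp
qed

lemma pd_exact_ge: fixes q :: rat
  assumes "\<not> p dvd s" "q * of_int (p^m * s) = of_int (p^k * r)" "n + m \<le> k"
  shows "padic_dvd p n q"
proof -
  have s0: "s \<noteq> 0" using assms(1) by auto
  have "p^k = p^n * p^(k - m - n) * p^m" using assms(3) by (simp add: power_add[symmetric])
  then have "q * of_int (p^m) * of_int s = of_int (p^n * p^(k - m - n) * r) * of_int (p^m)" using assms(2) by (simp add: algebra_simps)
  then have "q * of_int s = of_int (p^n * p^(k - m - n) * r)" using p_pos by simp
  then have "q = of_int (p^n) * of_int (p^(k - m - n) * r) / of_int s" using s0 by (simp add: field_simps)
  then show ?thesis using assms(1) by (rule pd_intro[rotated])
qed

lemma pd_dich: fixes q :: rat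
  assumes "q \<noteq> 0" shows "padic_dvd p n q \<or> padic_dvd p 1 (of_int (p^n) / q)"
proof -
  obtain k m r s where ers: "\<not> p dvd r" "\<not> p dvd s" "q * of_int (p^m * s) = of_int (p^k * r)"
    using pd_exact[OF assms] by blast
  show ?thesis
  proof (cases "n + m \<le> k")
    case True then show ?thesis using pd_exact_ge[OF ers(2,3)] by blast
  next
    case False
    have r0: "r \<noteq> 0" using ers by auto
    have "(of_int (p^n) / q) * of_int (p^k * r) = of_int (p^n) / q * (q * of_int (p^m * s))" using ers(3) by simp
    also have "\<dots> = of_int (p^(n+m) * s)" using assms by (simp add: power_add)
    finally have "(of_int (p^n) / q) * of_int (p^k * r) = of_int (p^(n+m) * s)" .
    then show ?thesis using False pd_exact_ge[OF ers(1), of "of_int (p^n) / q" k "n+m" s 1] by simp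
  qed
qed

lemma pd_sq: fixes q :: rat
  assumes "padic_dvd p 0 (q^2)" shows "padic_dvd p 0 q"
proof (cases "q = 0")
  case True then show ?thesis using pd_0 by simp
next
  case False
  obtain k m r s where ers: "\<not> p dvd r" "\<not> p dvd s" "q * of_int (p^m * s) = of_int (p^k * r)"
    using pd_exact[OF False] by blast
  have "q^2 * of_int (p^(2*m) * s^2) = of_int (p^(2*k) * r^2)"
    using arg_cong[OF ers(3), of "\<lambda>x. x^2"] by (simp add: power_mult_distrib power_mult mult.commute)
  moreover have "\<not> p dvd r^2" "\<not> p dvd s^2" using ers pp by (simp_all add: prime_dvd_power_iff)
  ultimately have "0 + 2*m \<le> 2*k" using pd_exact_le assms by blast
  then show ?thesis using pd_exact_ge[OF ers(2,3), of 0] by simp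
qed

lemma pd_int_iff: "padic_dvd p n (of_int k) \<longleftrightarrow> p^n dvd k"
proof
  assume "padic_dvd p n (of_int k)"
  then obtain r s where 1: "\<not> p dvd s" "(of_int k :: rat) = of_int (p^n) * of_int r / of_int s" unfolding padic_dvd_def by blast
  have "s \<noteq> 0" using 1 by auto
  then have "(of_int (k * s) :: rat) = of_int (p^n * r)" using 1(2) by (simp add: field_simps)
  then have "k * s = p^n * r" by (simp only: of_int_eq_iff)
  then have "p^n dvd k * s" by simp
  moreover have "coprime (p^n) s" using 1(1) pp by (simp add: prime_imp_coprime)
  ultimately show "p^n dvd k" using coprime_dvd_mult_left_iff by blast
qed (rule pd_int)

lemma pd_inv_unit: assumes "padic_dvd p 0 x" "\<not> padic_dvd p 1 x" shows "padic_dvd p 0 (1 / x)"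
proof -
  have x0: "x \<noteq> 0" using assms(2) pd_0 by auto
  obtain k m r s where ers: "\<not> p dvd r" "\<not> p dvd s" "x * of_int (p^m * s) = of_int (p^k * r)"
    using pd_exact[OF x0] by blast
  have "m \<le> k" using pd_exact_le[OF ers assms(1)] by simp
  moreover have "\<not> 1 + m \<le> k" using pd_exact_ge[OF ers(2,3), of 1] assms(2) by auto
  ultimately have e: "k = m" by simp
  have r0: "r \<noteq> 0" using ers by auto
  have "x * of_int s = of_int r" using ers(3) e p_pos by simp
  then have "1 / x = of_int (p^0) * of_int s / of_int r" using x0 r0 by (simp add: field_simps)
  then show ?thesis using ers(1) by (rule pd_intro[rotated])
qed

lemma pd_approx: assumes "padic_dvd p 0 x" shows "\<exists>A::int. padic_dvd p 1 (x - of_int A)"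
proof -
  obtain r s where 1: "\<not> p dvd s" "x = of_int r / of_int s" using assms unfolding padic_dvd_def by auto
  have "coprime s p" using 1(1) pp by (simp add: prime_imp_coprime coprime_commute)
  then have "gcd s p = 1" by simp
  then obtain u v where uv: "u * s + v * p = 1" using bezout_int[of s p] by auto
  have s0: "s \<noteq> 0" using 1 by auto
  have uv': "(of_int u :: rat) * of_int s = 1 - of_int v * of_int p" using uv
    by (metis add_diff_cancel_right' of_int_1 of_int_add of_int_mult)
  have "x - of_int (r * u) = of_int r * (1 - of_int u * of_int s) / of_int s"
    using 1(2) s0 by (simp add: field_simps)
  also have "\<dots> = of_int (p^1) * of_int (r * v) / of_int s" unfolding uv' by (simp add: algebra_simps)
  finally have "x - of_int (r * u) = of_int (p^1) * of_int (r * v) / of_int s" .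
  then show ?thesis using 1(1) by (blast intro: pd_intro[rotated])
qed

end

lemma int_from_powers: fixes q :: rat and M :: int
  assumes M: "M > 0" and all: "\<And>k. of_int M * q ^ k \<in> \<int>"
  shows "q \<in> \<int>"
proof -
  obtain r s where rs: "quotient_of q = (r, s)" by (cases "quotient_of q")
  then have s: "s > 0" "q = of_int r / of_int s" "coprime r s" using quotient_of_denom_pos quotient_of_div quotient_of_coprime by blast+
  show ?thesis
  proof (cases "s = 1")
    case True then show ?thesis using s by simp
  next
    case False
    have False
    proof -
      obtain n where n: "of_int M * q ^ (nat M) = of_int n" using all[of "nat M"] by (auto elim: Ints_cases)
      have "(of_int (M * r ^ nat M) :: rat) = of_int (n * s ^ nat M)"
        using n s(1,2) by (simp add: field_simps power_divide)
      then have eq: "M * r ^ nat M = n * s ^ nat M" by (simp only: of_int_eq_iff)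
      have "s ^ nat M dvd M * r ^ nat M" unfolding eq by simp
      moreover have "coprime (s ^ nat M) (r ^ nat M)" using s(3) by (simp add: coprime_commute)
      ultimately have "s ^ nat M dvd M" using coprime_dvd_mult_left_iff by blast
      moreover have "M < s ^ nat M"
      proof -
        have "s \<ge> 2" using s(1) False by simp
        then have "(2::int) ^ nat M \<le> s ^ nat M" by (simp add: power_mono)
        moreover have "M < 2 ^ nat M" using M by (metis of_nat_less_two_power int_nat_eq less_le_trans not_le order.refl zless_nat_eq_int_zless) 
        ultimately show ?thesis by simp
      qed
      ultimately show False using M by (meson zdvd_imp_le not_le)
    qed
    then show ?thesis by simp
  qed
qed

lemma qnorm_qc: "qnorm a b x = (qc x 0)^2 - a * (qc x 1)^2 - b * (qc x 2)^2 + a * b * (qc x 3)^2"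
  by (cases x) simp

lemma lt4: "m < (4::nat) \<Longrightarrow> m = 0 \<or> m = 1 \<or> m = 2 \<or> m = 3" by auto

lemma scal_help: "of_int D * w0 = (of_int W0 :: rat) \<Longrightarrow> of_int g \<noteq> (0::rat) \<Longrightarrow> W0 = g * X0 \<Longrightarrow> of_int X0 = of_int D / of_int g * w0"
  by (simp add: field_simps)

lemma prim_vec:
  fixes p :: int and w :: quat
  assumes pp: "prime p" and m: "m < 4" "qc w m \<noteq> 0"
  shows "\<exists>x0 x1 x2 x3 K :: int. \<not> (p dvd x0 \<and> p dvd x1 \<and> p dvd x2 \<and> p dvd x3) \<and>
     qnorm a b (Quat (of_int x0) (of_int x1) (of_int x2) (of_int x3)) = (of_int K)^2 * qnorm a b w / (qc w m)^2"
proof -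
  obtain D where D: "D > 0" "\<forall>q\<in>set [qc w 0, qc w 1, qc w 2, qc w 3]. of_int D * q \<in> \<int>" using common_denom by blast
  obtain W0 W1 W2 W3 where W: "of_int D * qc w 0 = of_int W0" "of_int D * qc w 1 = of_int W1" "of_int D * qc w 2 = of_int W2" "of_int D * qc w 3 = of_int W3"
    using D(2) by (auto elim!: Ints_cases)
  define g where "g = gcd (gcd (gcd W0 W1) W2) W3"
  have gd: "g dvd W0" "g dvd W1" "g dvd W2" "g dvd W3" unfolding g_def by (meson dvd_trans gcd_dvd1 gcd_dvd2)+
  have Wn: "\<not> (W0 = 0 \<and> W1 = 0 \<and> W2 = 0 \<and> W3 = 0)"
  proof
    assume "W0 = 0 \<and> W1 = 0 \<and> W2 = 0 \<and> W3 = 0"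
    then have "qc w 0 = 0" "qc w 1 = 0" "qc w 2 = 0" "qc w 3 = 0" using W D(1) by auto
    then show False using m lt4[of m] by auto
  qed
  have g0: "g > 0"
  proof -
    have "g \<noteq> 0" using Wn unfolding g_def by simp
    then show ?thesis unfolding g_def by simp
  qed
  obtain X0 X1 X2 X3 where X: "W0 = g * X0" "W1 = g * X1" "W2 = g * X2" "W3 = g * X3" using gd by (metis dvdE)
  have prim: "\<not> (p dvd X0 \<and> p dvd X1 \<and> p dvd X2 \<and> p dvd X3)"
  proof
    assume "p dvd X0 \<and> p dvd X1 \<and> p dvd X2 \<and> p dvd X3"
    then have "p * g dvd X0 * g" "p * g dvd X1 * g" "p * g dvd X2 * g" "p * g dvd X3 * g"
      by (meson dvd_refl mult_dvd_mono)+
    then have "p * g dvd W0" "p * g dvd W1" "p * g dvd W2" "p * g dvd W3" unfolding X by (simp_all only: mult.commute)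
    then have "p * g dvd g" unfolding g_def by (meson gcd_greatest)
    then have "p * g \<le> g" using g0 by (simp add: zdvd_imp_le)
    moreover have "p > 1" using pp prime_gt_1_int by blast
    then have "1 * g < p * g" using g0 by (intro mult_strict_right_mono) auto
    ultimately show False by simp
  qed
  define mu where "mu = of_int D / (of_int g :: rat)"
  have Xmu: "Quat (of_int X0) (of_int X1) (of_int X2) (of_int X3) = qsmul mu w"
  proof (cases w)
    case (Quat w0 w1 w2 w3)
    have gq: "(of_int g :: rat) \<noteq> 0" using g0 by simp
    have "of_int X0 = mu * w0" "of_int X1 = mu * w1" "of_int X2 = mu * w2" "of_int X3 = mu * w3"
      unfolding mu_def using scal_help[OF _ gq] W X unfolding Quat by simp_all
    then show ?thesis using Quat by simp
  qed
  have Xm: "of_int ([X0,X1,X2,X3] ! m) = mu * qc w m"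
    using Xmu lt4[OF m(1)] by (cases w) auto
  have "qnorm a b (Quat (of_int X0) (of_int X1) (of_int X2) (of_int X3)) = mu^2 * qnorm a b w"
    unfolding Xmu by (rule qnorm_smul)
  also have "\<dots> = (of_int ([X0,X1,X2,X3] ! m))^2 * qnorm a b w / (qc w m)^2"
    unfolding Xm using m by (simp add: power_mult_distrib)
  finally show ?thesis using prim by blast
qed

lemma pd_denom: assumes "prime p" shows "\<exists>E. padic_dvd p 0 (of_int (p^E) * q)"
proof (cases "q = 0")
  case True then show ?thesis using pd_0[OF assms] by simp
next
  case False
  obtain k m r s where ers: "\<not> p dvd r" "\<not> p dvd s" "q * of_int (p^m * s) = of_int (p^k * r)"
    using pd_exact[OF assms False] by blast
  have s0: "(of_int s :: rat) \<noteq> 0" using ers(2) by auto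
  have "of_int (p^m) * q = (q * of_int (p^m * s)) / of_int s" using s0 by simp
  also have "\<dots> = of_int (p^0) * of_int (p^k * r) / of_int s" unfolding ers(3) by simp
  finally have "of_int (p^m) * q = of_int (p^0) * of_int (p^k * r) / of_int s" .
  then show ?thesis using ers(2) by (blast intro: pd_intro[OF assms, rotated])
qed

lemma iso_not_ram:
  assumes pp: "prime p" and m: "m < 4" and C: "C \<noteq> 0"
    and fam: "\<And>n. \<exists>w. qc w m = C \<and> padic_dvd p n (qnorm a b w)"
  shows "\<not> ram_at a b p"
proof -
  obtain E where E: "padic_dvd p 0 (of_int (p^E) * (1 / C^2))" using pd_denom[OF pp] by blast
  have "\<exists>x0 x1 x2 x3 :: int. \<not> (p dvd x0 \<and> p dvd x1 \<and> p dvd x2 \<and> p dvd x3) \<and>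
            padic_dvd p n (qnorm a b (Quat (of_int x0) (of_int x1) (of_int x2) (of_int x3)))" for n
  proof -
    obtain w where w: "qc w m = C" "padic_dvd p (n + E) (qnorm a b w)" using fam by blast
    obtain x0 x1 x2 x3 K where X: "\<not> (p dvd x0 \<and> p dvd x1 \<and> p dvd x2 \<and> p dvd x3)"
      "qnorm a b (Quat (of_int x0) (of_int x1) (of_int x2) (of_int x3)) = (of_int K)^2 * qnorm a b w / (qc w m)^2"
      using prim_vec[OF pp m, of w a b] w(1) C by blast
    have B: "of_int (p^E) * qnorm a b (Quat (of_int x0) (of_int x1) (of_int x2) (of_int x3))
        = of_int (K^2) * ((of_int (p^E) * (1 / C^2)) * qnorm a b w)"
      using X(2) w(1) by simp
    have "padic_dvd p (0 + (n + E)) ((of_int (p^E) * (1 / C^2)) * qnorm a b w)"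
      using pd_mult[OF pp E w(2)] .
    then have A: "padic_dvd p (n + E) (of_int (K^2) * ((of_int (p^E) * (1 / C^2)) * qnorm a b w))"
      using pd_smul[OF pp] by (simp only: add_0)
    have "padic_dvd p (n + E) (of_int (p^E) * qnorm a b (Quat (of_int x0) (of_int x1) (of_int x2) (of_int x3)))"
      unfolding B by (rule A)
    then have "padic_dvd p n (qnorm a b (Quat (of_int x0) (of_int x1) (of_int x2) (of_int x3)))"
      using pd_shift[OF pp] by blast
    then show ?thesis using X(1) by blast
  qed
  then show ?thesis unfolding ram_at_def by blast
qed

locale setting =
  fixes p :: int and a b :: rat
  assumes pp: "prime p" and p2: "p > 2" and ram: "ramified_exactly_at a b p"
begin

lemma ram_p: "ram_at a b p" using ram pp unfolding ramified_exactly_at_def by blast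
lemma a0: "a \<noteq> 0" and b0: "b \<noteq> 0" using ram unfolding ramified_exactly_at_def by auto

lemma p_ndvd2: "\<not> p dvd 2"
proof
  assume "p dvd 2" then have "p \<le> 2" by (simp add: zdvd_imp_le)
  then show False using p2 by simp
qed

lemma ANI: assumes N: "padic_dvd p 0 (qnorm a b z)" shows "padic_dvd p 0 (qtr z)"
proof (rule ccontr)
  assume nt: "\<not> padic_dvd p 0 (qtr z)"
  obtain z0 z1 z2 z3 where z: "z = Quat z0 z1 z2 z3" by (cases z)
  define t where "t = qtr z"
  have t: "t = 2 * z0" unfolding t_def z by simp
  have "\<exists>m. 0 < m \<and> m < 4 \<and> qc z m \<noteq> 0"
  proof (rule ccontr)
    assume "\<not> ?thesis"
    then have "z1 = 0" "z2 = 0" "z3 = 0" unfolding z by (auto dest: spec[of _ 1] spec[of _ 2] spec[of _ 3])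
    then have "qnorm a b z = z0^2" unfolding z by simp
    then have "padic_dvd p 0 z0" using pd_sq[OF pp] N by simp
    then have "padic_dvd p 0 (qtr z)" unfolding z using pd_smul[OF pp, of 0 z0 2] by simp
    then show False using nt by simp
  qed
  then obtain m where m: "0 < m" "m < 4" "qc z m \<noteq> 0" by blast
  have t0: "t \<noteq> 0" using nt pd_0[OF pp] unfolding t_def by auto
  have it: "padic_dvd p 1 (1 / t)" using pd_dich[OF pp t0, of 0] nt unfolding t_def by simp
  define c where "c = qnorm a b z / t^2"
  have c: "padic_dvd p 2 c"
  proof -
    have "padic_dvd p (0 + (1 + 1)) (qnorm a b z * ((1/t) * (1/t)))"
      using pd_mult[OF pp N pd_mult[OF pp it it]] .
    moreover have "qnorm a b z * ((1/t) * (1/t)) = c" unfolding c_def by (simp add: power2_eq_square)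
    moreover have "(0 + (1 + 1)) = (2::nat)" by simp
    ultimately show ?thesis by (simp only:)
  qed
  define g where "g = (\<lambda>y::rat. y^2 - y + c)"
  define y where "y = rec_nat (1::rat) (\<lambda>_ y. y - g y)"
  have y0: "y 0 = 1" and yS: "\<And>k. y (Suc k) = y k - g (y k)" unfolding y_def by simp_all
  have inv: "padic_dvd p 1 (y k - 1) \<and> padic_dvd p (k+1) (g (y k))" for k
  proof (induction k)
    case 0
    have "g (y 0) = c" unfolding y0 g_def by simp
    then show ?case using pd_mono[OF pp _ c, of 1] pd_0[OF pp] y0 by simp
  next
    case (Suc k)
    have a1: "padic_dvd p 1 (g (y k))" using Suc pd_mono[OF pp, of 1 "k+1"] by simp
    have b1: "padic_dvd p 1 (y (Suc k) - 1)" unfolding yS using pd_diff[OF pp Suc[THEN conjunct1] a1] by (simp add: algebra_simps)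
    have eq: "g (y (Suc k)) = g (y k) * (of_int (-2) * (y k - 1) + g (y k))"
      unfolding yS g_def by (simp add: algebra_simps power2_eq_square)
    have "padic_dvd p 1 (of_int (-2) * (y k - 1) + g (y k))"
      using pd_add[OF pp pd_smul[OF pp Suc[THEN conjunct1]] a1] .
    then have "padic_dvd p ((k+1) + 1) (g (y (Suc k)))" unfolding eq using pd_mult[OF pp Suc[THEN conjunct2]] by blast
    then show ?case using b1 by simp
  qed
  obtain E where E: "padic_dvd p 0 (of_int (p^E) * t^2)" using pd_denom[OF pp] by blast
  have "\<exists>w. qc w m = qc z m \<and> padic_dvd p n (qnorm a b w)" for n
  proof -
    define w where "w = z - qof (t * y (n + E))"
    have wm: "qc w m = qc z m" unfolding w_def z qof_def using m by auto
    have "qnorm a b w = (t * y (n+E))^2 - (t * y (n+E)) * t + qnorm a b z"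
      unfolding w_def qnorm_diff_qof t_def ..
    also have "\<dots> = t^2 * g (y (n+E))" unfolding g_def c_def using t0 by (simp add: field_simps power2_eq_square)
    finally have Nw: "qnorm a b w = t^2 * g (y (n+E))" .
    have "padic_dvd p (0 + (n + E + 1)) (of_int (p^E) * t^2 * g (y (n+E)))"
      using pd_mult[OF pp E inv[THEN conjunct2]] by simp
    then have "padic_dvd p (n + E) (of_int (p^E) * qnorm a b w)"
      unfolding Nw using pd_mono[OF pp, of "n+E" "n+E+1"] by (simp add: mult.assoc)
    then have "padic_dvd p n (qnorm a b w)" using pd_shift[OF pp] by blast
    then show ?thesis using wm by blast
  qed
  then have "\<not> ram_at a b p" using iso_not_ram[OF pp m(2) m(3)] by blast
  then show False using ram_p by simp
qed

end

fun qpow :: "rat \<Rightarrow> rat \<Rightarrow> quat \<Rightarrow> nat \<Rightarrow> quat" where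
  "qpow a b x 0 = qone"
| "qpow a b x (Suc k) = qmul a b x (qpow a b x k)"

lemma qnorm_qpow: "qnorm a b (qpow a b x k) = (qnorm a b x) ^ k"
  by (induction k) (simp_all add: qone_def qnorm_mult)

lemma qnorm_conj: "qnorm a b (qconj x) = qnorm a b x" by (cases x) simp
lemma qtr_conj: "qtr (qconj x) = qtr x" by (cases x) simp
lemma qof_smul_one: "qof r = qsmul r qone" by (simp add: qof_def qone_def)

context fixes a b :: rat and Om :: "quat set" assumes ord: "is_order a b Om"
begin

lemma ordL: "is_lattice Om" using ord unfolding is_order_def by blast
lemma ord_one: "qone \<in> Om" using ord unfolding is_order_def by blast
lemma ord_mul: "x \<in> Om \<Longrightarrow> y \<in> Om \<Longrightarrow> qmul a b x y \<in> Om" using ord unfolding is_order_def by blast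
lemma ord_add: "x \<in> Om \<Longrightarrow> y \<in> Om \<Longrightarrow> x + y \<in> Om" using latt_add[OF ordL] .
lemma ord_diff: "x \<in> Om \<Longrightarrow> y \<in> Om \<Longrightarrow> x - y \<in> Om" using latt_diff[OF ordL] .
lemma ord_neg: "x \<in> Om \<Longrightarrow> - x \<in> Om" using latt_neg[OF ordL] .
lemma ord_0: "0 \<in> Om" using latt_0[OF ordL] .
lemma ord_smul: "x \<in> Om \<Longrightarrow> qsmul (of_int k) x \<in> Om" using latt_smul[OF ordL] .
lemma ord_int: "qof (of_int k) \<in> Om" unfolding qof_smul_one using ord_smul[OF ord_one] .
lemma ord_pow: "x \<in> Om \<Longrightarrow> qpow a b x k \<in> Om"
  by (induction k) (simp_all add: ord_one ord_mul)

lemma ord_norm_int: assumes x: "x \<in> Om" shows "qnorm a b x \<in> \<int>"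
proof -
  obtain v0 v1 v2 v3 where L: "Om = lat v0 v1 v2 v3" using ordL unfolding is_lattice_iff by blast
  obtain D where D: "D > 0" "\<forall>y\<in>lat v0 v1 v2 v3. \<forall>i<4. of_int D * qc y i \<in> \<int>" using lat_denom by blast
  obtain d where d: "d > 0" "\<forall>q\<in>set [a, b, a*b]. of_int d * q \<in> \<int>" using common_denom by blast
  have "of_int (d * D^2) * qnorm a b y \<in> \<int>" if y: "y \<in> Om" for y
  proof -
    have Y: "of_int D * qc y i \<in> \<int>" if "i < 4" for i using D(2) y L that by blast
    obtain n0 n1 n2 n3 where n: "of_int D * qc y 0 = of_int n0" "of_int D * qc y 1 = of_int n1" "of_int D * qc y 2 = of_int n2" "of_int D * qc y 3 = of_int n3"
      using Y[of 0] Y[of 1] Y[of 2] Y[of 3] by (auto elim!: Ints_cases)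
    obtain e1 e2 e3 where e: "of_int d * a = of_int e1" "of_int d * b = of_int e2" "of_int d * (a * b) = of_int e3"
      using d(2) by (auto elim!: Ints_cases)
    have "of_int (d * D^2) * qnorm a b y = of_int d * (of_int D * qc y 0)^2 - (of_int d * a) * (of_int D * qc y 1)^2
        - (of_int d * b) * (of_int D * qc y 2)^2 + (of_int d * (a * b)) * (of_int D * qc y 3)^2"
      unfolding qnorm_qc by (simp add: algebra_simps power2_eq_square)
    also have "\<dots> = of_int (d * n0^2 - e1 * n1^2 - e2 * n2^2 + e3 * n3^2)" unfolding n e by simp
    finally show ?thesis by (metis Ints_of_int)
  qed
  then have "of_int (d * D^2) * (qnorm a b x) ^ k \<in> \<int>" for k
    using ord_pow[OF x, of k] qnorm_qpow[of a b x k] by metis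
  moreover have "d * D^2 > 0" using d(1) D(1) by simp
  ultimately show ?thesis using int_from_powers by blast
qed

lemma ord_tr_int: assumes x: "x \<in> Om" shows "qtr x \<in> \<int>"
proof -
  have "x + qof 1 \<in> Om" using ord_add[OF x ord_int[of 1]] by simp
  then have "qnorm a b (x + qof 1) \<in> \<int>" by (rule ord_norm_int)
  moreover have "qnorm a b (x + qof 1) = 1 + qtr x + qnorm a b x" by (simp add: qnorm_add_qof)
  ultimately have "1 + qtr x + qnorm a b x - 1 - qnorm a b x \<in> \<int>" using ord_norm_int[OF x] by (metis Ints_diff Ints_1)
  then show ?thesis by simp
qed

lemma ord_disc_int: "x \<in> Om \<Longrightarrow> qdisc a b x \<in> \<int>"
  unfolding qdisc_def using ord_norm_int ord_tr_int by (intro Ints_diff Ints_mult Ints_power) auto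

lemma ord_conj: assumes x: "x \<in> Om" shows "qconj x \<in> Om"
proof -
  obtain k where "qtr x = of_int k" using ord_tr_int[OF x] by (auto elim: Ints_cases)
  then show ?thesis unfolding qconj_eq using ord_diff[OF ord_int x] by simp
qed

end

context setting
begin

definition inR :: "quat \<Rightarrow> bool" where "inR z \<longleftrightarrow> padic_dvd p 0 (qnorm a b z)"

lemma R_mul: "inR z \<Longrightarrow> inR w \<Longrightarrow> inR (qmul a b z w)"
  unfolding inR_def qnorm_mult using pd_mult[OF pp] by fastforce

lemma R_conj: "inR z \<Longrightarrow> inR (qconj z)" unfolding inR_def qnorm_conj .

lemma R_add: assumes "inR z" "inR w" shows "inR (z + w)"
proof -
  have "padic_dvd p 0 (qtr (qmul a b z (qconj w)))" using ANI R_mul[OF assms(1) R_conj[OF assms(2)]] unfolding inR_def by blast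
  then show ?thesis using assms unfolding inR_def qnorm_add by (intro pd_add[OF pp]) auto
qed

lemma R_neg: "inR z \<Longrightarrow> inR (- z)" unfolding inR_def qnorm_neg .
lemma R_smul: "padic_dvd p 0 c \<Longrightarrow> inR z \<Longrightarrow> inR (qsmul c z)"
  unfolding inR_def qnorm_smul using pd_mult[OF pp, of 0 "c^2" 0] pd_mult[OF pp, of 0 c 0 c] by (simp add: power2_eq_square)
lemma R_of: "padic_dvd p 0 c \<Longrightarrow> inR (qof c)"
  unfolding inR_def qnorm_qof using pd_mult[OF pp, of 0 c 0 c] by (simp add: power2_eq_square)

lemma pd_div_p2: assumes "padic_dvd p 2 y" shows "padic_dvd p 0 (y / of_int p ^ 2)"
proof -
  have eq: "of_int (p^2) * (y / of_int p ^ 2) = y" using p_pos[OF pp] by simp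
  have "padic_dvd p (0 + 2) (of_int (p^2) * (y / of_int p ^ 2))" unfolding eq using assms by (simp only: add_0)
  then show ?thesis by (rule pd_shift[OF pp])
qed

lemma pd_times_p: "padic_dvd p 0 (x / of_int p) \<Longrightarrow> padic_dvd p 1 x"
proof -
  assume "padic_dvd p 0 (x / of_int p)"
  then have "padic_dvd p (0 + 1) (of_int (p^1) * (x / of_int p))" by (rule pd_shift2[OF pp])
  moreover have "of_int (p^1) * (x / of_int p) = x" using p_pos[OF pp] by simp
  ultimately show ?thesis by simp
qed

lemma ANI2: assumes "padic_dvd p 2 (qnorm a b z)" shows "padic_dvd p 1 (qtr z)"
proof -
  have "qnorm a b (qsmul (1 / of_int p) z) = qnorm a b z / of_int p ^ 2"
    by (simp add: qnorm_smul power_divide)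
  then have "padic_dvd p 0 (qtr (qsmul (1 / of_int p) z))" using ANI pd_div_p2[OF assms] by simp
  then show ?thesis unfolding qtr_smul by (intro pd_times_p) simp
qed

lemma pd_sq1: assumes t: "padic_dvd p 0 t" and t2: "padic_dvd p 1 (t^2)" shows "padic_dvd p 1 t"
proof (rule ccontr)
  assume n: "\<not> padic_dvd p 1 t"
  have it: "padic_dvd p 0 (1 / t)" using pd_inv_unit[OF pp t n] .
  have t0: "t \<noteq> 0" using n pd_0[OF pp] by auto
  have A: "padic_dvd p (1 + (0 + 0)) (t^2 * ((1/t) * (1/t)))" by (rule pd_mult[OF pp t2 pd_mult[OF pp it it]])
  have eq: "t^2 * ((1/t) * (1/t)) = of_int 1" using t0 by (simp add: power2_eq_square)
  have "padic_dvd p (1 + (0 + 0)) (of_int 1)" using A unfolding eq .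
  then have "p^(1 + (0 + 0)) dvd 1" using pd_int_iff[OF pp] by blast
  then have "p^1 dvd 1" by simp
  then show False using p_nunit[OF pp] by simp
qed

lemma P_add: assumes "padic_dvd p 1 (qnorm a b u)" "padic_dvd p 1 (qnorm a b w)" shows "padic_dvd p 1 (qnorm a b (u + w))"
proof -
  have "padic_dvd p (1 + 1) (qnorm a b (qmul a b u (qconj w)))"
    unfolding qnorm_mult qnorm_conj using pd_mult[OF pp assms] .
  then have "padic_dvd p 1 (qtr (qmul a b u (qconj w)))" using ANI2 by (simp only: one_add_one)
  then show ?thesis unfolding qnorm_add using assms by (intro pd_add[OF pp]) auto
qed

lemma P_tr: assumes "padic_dvd p 1 (qnorm a b u)" shows "padic_dvd p 1 (qtr u)"
proof -
  have N0: "padic_dvd p 0 (qnorm a b u)" using pd_mono[OF pp _ assms] by simp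
  have "padic_dvd p (1 + 1) (qnorm a b (qmul a b u u))" unfolding qnorm_mult using pd_mult[OF pp assms assms] .
  then have "padic_dvd p 1 (qtr (qmul a b u u))" using ANI2 by (simp only: one_add_one)
  moreover have "qtr (qmul a b u u) = (qtr u)^2 - 2 * qnorm a b u"
    unfolding qmul_sq qtr_diff qtr_smul qtr_qof by (simp add: power2_eq_square)
  ultimately have A: "padic_dvd p 1 ((qtr u)^2 - 2 * qnorm a b u)" by simp
  have "padic_dvd p 1 ((qtr u)^2 - 2 * qnorm a b u + of_int 2 * qnorm a b u)"
    by (rule pd_add[OF pp A pd_smul[OF pp assms]])
  then have "padic_dvd p 1 ((qtr u)^2)" by simp
  then show ?thesis using pd_sq1 ANI[OF N0] by blast
qed

end

lemma level_lemma:
  fixes H :: "quat set" and f :: "quat \<Rightarrow> rat"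
  assumes add: "\<And>x y. x \<in> H \<Longrightarrow> y \<in> H \<Longrightarrow> x + y \<in> H"
    and sm: "\<And>x k. x \<in> H \<Longrightarrow> qsmul (of_int k) x \<in> H"
    and fadd: "\<And>x y. x \<in> H \<Longrightarrow> y \<in> H \<Longrightarrow> f (x + y) = f x + f y"
    and fsm: "\<And>x k. x \<in> H \<Longrightarrow> f (qsmul (of_int k) x) = of_int k * f x"
    and fint: "\<And>x. x \<in> H \<Longrightarrow> f x \<in> \<int>"
    and ex: "x0 \<in> H" "f x0 \<noteq> 0"
  shows "\<exists>g\<in>H. f g > 0 \<and> (\<forall>x\<in>H. \<exists>k::int. f x = of_int k * f g)"
proof -
  define S where "S = {n::nat. n > 0 \<and> (\<exists>x\<in>H. f x = of_nat n)}"
  obtain n0 where n0: "f x0 = of_int n0" using fint[OF ex(1)] by (auto elim: Ints_cases)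
  have "nat \<bar>n0\<bar> \<in> S"
  proof -
    have "n0 \<noteq> 0" using ex n0 by auto
    moreover have "qsmul (of_int (sgn n0)) x0 \<in> H" using sm ex by blast
    moreover have "f (qsmul (of_int (sgn n0)) x0) = of_nat (nat \<bar>n0\<bar>)"
    proof -
      have "f (qsmul (of_int (sgn n0)) x0) = of_int (sgn n0) * of_int n0" using fsm[OF ex(1)] n0 by simp
      also have "\<dots> = of_int (sgn n0 * n0)" by simp
      also have "sgn n0 * n0 = int (nat \<bar>n0\<bar>)" by (auto simp: sgn_if)
      finally show ?thesis by simp
    qed
    ultimately show ?thesis unfolding S_def by auto
  qed
  then have "S \<noteq> {}" by blast
  define d where "d = Least (\<lambda>n. n \<in> S)"
  have dS: "d \<in> S" unfolding d_def using \<open>nat \<bar>n0\<bar> \<in> S\<close> by (rule LeastI)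
  have dmin: "\<And>n. n \<in> S \<Longrightarrow> d \<le> n" unfolding d_def by (rule Least_le)
  obtain g where g: "g \<in> H" "f g = of_nat d" "d > 0" using dS unfolding S_def by blast
  have hx: "\<exists>k::int. f x = of_int k * f g" if x: "x \<in> H" for x
  proof -
    obtain n where n: "f x = of_int n" using fint[OF x] by (auto elim: Ints_cases)
    define q r where "q = n div int d" and "r = n mod int d"
    have nr: "n = q * int d + r" and r: "0 \<le> r" "r < int d" using g(3) unfolding q_def r_def by auto
    define y where "y = x + qsmul (of_int (- q)) g"
    have yH: "y \<in> H" unfolding y_def using add[OF x sm[OF g(1)]] .
    have "f y = f x + f (qsmul (of_int (- q)) g)" unfolding y_def by (rule fadd[OF x sm[OF g(1)]])
    also have "\<dots> = f x + of_int (- q) * f g" by (subst fsm[OF g(1)]) (rule refl)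
    also have "\<dots> = of_int r" unfolding n g(2) nr by (simp add: algebra_simps)
    finally have fy: "f y = of_int r" .
    have "r = 0"
    proof (rule ccontr)
      assume "r \<noteq> 0"
      then have "nat r \<in> S" unfolding S_def using yH fy r by auto
      then have "d \<le> nat r" by (rule dmin)
      then show False using r by simp
    qed
    then show ?thesis using n nr g(2) by (intro exI[of _ q]) simp
  qed
  have fg: "f g > 0" using g(2,3) by simp
  have "f g > 0 \<and> (\<forall>x\<in>H. \<exists>k::int. f x = of_int k * f g)" using hx fg by blast
  then show ?thesis using g(1) by (rule bexI)
qed

locale cbasis =
  fixes v0 v1 v2 v3 :: quat
  assumes ind: "qindep v0 v1 v2 v3"
begin

definition co :: "quat \<Rightarrow> nat \<Rightarrow> rat" where
  "co x = (SOME c. x = qcomb v0 v1 v2 v3 (c 0) (c 1) (c 2) (c 3))"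

lemma co_spec: "x = qcomb v0 v1 v2 v3 (co x 0) (co x 1) (co x 2) (co x 3)"
proof -
  obtain c0 c1 c2 c3 where "x = qcomb v0 v1 v2 v3 c0 c1 c2 c3" using qindep_span[OF ind] by blast
  then have "\<exists>c::nat \<Rightarrow> rat. x = qcomb v0 v1 v2 v3 (c 0) (c 1) (c 2) (c 3)"
    by (intro exI[of _ "\<lambda>i::nat. if i = 0 then c0 else if i = 1 then c1 else if i = 2 then c2 else c3"]) simp
  then show ?thesis unfolding co_def by (rule someI_ex)
qed

lemma co_uniq: assumes "x = qcomb v0 v1 v2 v3 c0 c1 c2 c3"
  shows "co x 0 = c0" "co x 1 = c1" "co x 2 = c2" "co x 3 = c3"
proof -
  have "qcomb v0 v1 v2 v3 (co x 0) (co x 1) (co x 2) (co x 3) = qcomb v0 v1 v2 v3 c0 c1 c2 c3"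
    using co_spec[of x] assms by (rule trans[OF sym])
  from qcomb_unique[OF ind this] show "co x 0 = c0" "co x 1 = c1" "co x 2 = c2" "co x 3 = c3" by auto
qed

lemma co_add: "co (x + y) i = co x i + co y i" if "i < 4"
proof -
  have "x + y = qcomb v0 v1 v2 v3 (co x 0) (co x 1) (co x 2) (co x 3) + qcomb v0 v1 v2 v3 (co y 0) (co y 1) (co y 2) (co y 3)"
    using co_spec[of x] co_spec[of y] by (rule arg_cong2[where f="(+)"])
  then have "x + y = qcomb v0 v1 v2 v3 (co x 0 + co y 0) (co x 1 + co y 1) (co x 2 + co y 2) (co x 3 + co y 3)"
    by (simp only: qcomb_add)
  from co_uniq[OF this] show ?thesis using that lt4 by blast
qed

lemma co_smul: "co (qsmul r x) i = r * co x i" if "i < 4"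
proof -
  have "qsmul r x = qsmul r (qcomb v0 v1 v2 v3 (co x 0) (co x 1) (co x 2) (co x 3))"
    using co_spec[of x] by (rule arg_cong)
  then have "qsmul r x = qcomb v0 v1 v2 v3 (r * co x 0) (r * co x 1) (r * co x 2) (r * co x 3)"
    by (simp only: qcomb_smul)
  from co_uniq[OF this] show ?thesis using that lt4 by blast
qed

lemma co_addI: "i < 4 \<Longrightarrow> co (x + y) i = co x i + co y i" using co_add by blast
lemma co_smulI: "i < 4 \<Longrightarrow> co (qsmul r x) i = r * co x i" using co_smul by blast
lemma co_0: "i < 4 \<Longrightarrow> co 0 i = 0" using co_smulI[of i 0 0] by (simp add: qsmul_0)

lemma co_zero: assumes "co x 0 = 0" "co x 1 = 0" "co x 2 = 0" "co x 3 = 0" shows "x = 0"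
proof -
  have "x = qcomb v0 v1 v2 v3 (co x 0) (co x 1) (co x 2) (co x 3)" by (rule co_spec)
  also have "\<dots> = 0" unfolding assms by (rule qcomb_0)
  finally show ?thesis .
qed

lemma co_v: "co v0 0 = 1" "co v0 1 = 0" "co v0 2 = 0" "co v0 3 = 0"
  "co v1 0 = 0" "co v1 1 = 1" "co v1 2 = 0" "co v1 3 = 0"
  "co v2 0 = 0" "co v2 1 = 0" "co v2 2 = 1" "co v2 3 = 0"
  "co v3 0 = 0" "co v3 1 = 0" "co v3 2 = 0" "co v3 3 = 1"
proof -
  have e0: "v0 = qcomb v0 v1 v2 v3 1 0 0 0" by (simp add: qcomb_def qadd_eq qsmul_0 qsmul_1)
  have e1: "v1 = qcomb v0 v1 v2 v3 0 1 0 0" by (simp add: qcomb_def qadd_eq qsmul_0 qsmul_1)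
  have e2: "v2 = qcomb v0 v1 v2 v3 0 0 1 0" by (simp add: qcomb_def qadd_eq qsmul_0 qsmul_1)
  have e3: "v3 = qcomb v0 v1 v2 v3 0 0 0 1" by (simp add: qcomb_def qadd_eq qsmul_0 qsmul_1)
  show "co v0 0 = 1" "co v0 1 = 0" "co v0 2 = 0" "co v0 3 = 0" using co_uniq[OF e0] by auto
  show "co v1 0 = 0" "co v1 1 = 1" "co v1 2 = 0" "co v1 3 = 0" using co_uniq[OF e1] by auto
  show "co v2 0 = 0" "co v2 1 = 0" "co v2 2 = 1" "co v2 3 = 0" using co_uniq[OF e2] by auto
  show "co v3 0 = 0" "co v3 1 = 0" "co v3 2 = 0" "co v3 3 = 1" using co_uniq[OF e3] by auto
qed

lemma co_lat: assumes "x \<in> lat v0 v1 v2 v3" "i < 4" shows "co x i \<in> \<int>"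
proof -
  obtain n0 n1 n2 n3 :: int where x: "x = qcomb v0 v1 v2 v3 (of_int n0) (of_int n1) (of_int n2) (of_int n3)" using assms(1) by (rule lat_E)
  from lt4[OF assms(2)] show ?thesis using co_uniq[OF x] by (elim disjE) auto
qed

end

lemma sub_lattice:
  fixes G :: "quat set" and m :: int
  assumes ind: "qindep v0 v1 v2 v3"
    and add: "\<And>x y. x \<in> G \<Longrightarrow> y \<in> G \<Longrightarrow> x + y \<in> G"
    and sm: "\<And>x k. x \<in> G \<Longrightarrow> qsmul (of_int k) x \<in> G"
    and sub: "lat v0 v1 v2 v3 \<subseteq> G"
    and sup: "\<And>x. x \<in> G \<Longrightarrow> qsmul (of_int m) x \<in> lat v0 v1 v2 v3"
    and m: "m \<noteq> 0"
  shows "is_lattice G"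
proof -
  interpret cbasis v0 v1 v2 v3 using ind by unfold_locales
  have e0: "qcomb v0 v1 v2 v3 1 0 0 0 = v0" by (simp add: qcomb_def qadd_eq qsmul_0 qsmul_1)
  have e1: "qcomb v0 v1 v2 v3 0 1 0 0 = v1" by (simp add: qcomb_def qadd_eq qsmul_0 qsmul_1)
  have e2: "qcomb v0 v1 v2 v3 0 0 1 0 = v2" by (simp add: qcomb_def qadd_eq qsmul_0 qsmul_1)
  have e3: "qcomb v0 v1 v2 v3 0 0 0 1 = v3" by (simp add: qcomb_def qadd_eq qsmul_0 qsmul_1)
  have vG: "v0 \<in> G" "v1 \<in> G" "v2 \<in> G" "v3 \<in> G"
    using sub lat_memI[of 1 0 0 0 v0 v1 v2 v3] lat_memI[of 0 1 0 0 v0 v1 v2 v3]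
      lat_memI[of 0 0 1 0 v0 v1 v2 v3] lat_memI[of 0 0 0 1 v0 v1 v2 v3] unfolding e0 e1 e2 e3 by auto
  have cint: "of_int m * co x i \<in> \<int>" if "x \<in> G" "i < 4" for x i
    using co_lat[OF sup[OF that(1)] that(2)] co_smulI[OF that(2)] by simp
  have diff: "x + qsmul (of_int (- k)) y \<in> G" if "x \<in> G" "y \<in> G" for x y k using add[OF that(1) sm[OF that(2)]] .
  define f where "f = (\<lambda>i x. of_int m * co x i)"
  have fadd: "f i (x + y) = f i x + f i y" if "i < 4" for i x y unfolding f_def co_addI[OF that] by (simp add: algebra_simps)
  have fsm: "f i (qsmul (of_int k) x) = of_int k * f i x" if "i < 4" for i x k unfolding f_def co_smulI[OF that] by (simp add: algebra_simps)
  define H2 where "H2 = {x \<in> G. co x 3 = 0}"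
  define H1 where "H1 = {x \<in> G. co x 3 = 0 \<and> co x 2 = 0}"
  define H0 where "H0 = {x \<in> G. co x 3 = 0 \<and> co x 2 = 0 \<and> co x 1 = 0}"
  have add2: "x + y \<in> H2" if "x \<in> H2" "y \<in> H2" for x y using that add unfolding H2_def by (auto simp: co_addI)
  have sm2: "qsmul (of_int k) x \<in> H2" if "x \<in> H2" for x k using that sm unfolding H2_def by (auto simp: co_smulI)
  have add1: "x + y \<in> H1" if "x \<in> H1" "y \<in> H1" for x y using that add unfolding H1_def by (auto simp: co_addI)
  have sm1: "qsmul (of_int k) x \<in> H1" if "x \<in> H1" for x k using that sm unfolding H1_def by (auto simp: co_smulI)
  have add0: "x + y \<in> H0" if "x \<in> H0" "y \<in> H0" for x y using that add unfolding H0_def by (auto simp: co_addI)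
  have sm0: "qsmul (of_int k) x \<in> H0" if "x \<in> H0" for x k using that sm unfolding H0_def by (auto simp: co_smulI)
  have f3: "f 3 v3 \<noteq> 0" "f 2 v2 \<noteq> 0" "f 1 v1 \<noteq> 0" "f 0 v0 \<noteq> 0" unfolding f_def using co_v m by auto
  have vH: "v2 \<in> H2" "v1 \<in> H1" "v0 \<in> H0" unfolding H2_def H1_def H0_def using vG co_v by auto
  have G2: "H2 \<subseteq> G" "H1 \<subseteq> G" "H0 \<subseteq> G" unfolding H2_def H1_def H0_def by auto
  obtain g3 where g3: "g3 \<in> G" "f 3 g3 > 0" "\<forall>x\<in>G. \<exists>k::int. f 3 x = of_int k * f 3 g3"
    using level_lemma[of G "f 3" v3, OF add sm fadd fsm _ vG(4) f3(1)] cint unfolding f_def by auto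
  have fa2: "\<And>x y. x \<in> H2 \<Longrightarrow> y \<in> H2 \<Longrightarrow> f 2 (x + y) = f 2 x + f 2 y" using fadd by simp
  have fs2: "\<And>x k. x \<in> H2 \<Longrightarrow> f 2 (qsmul (of_int k) x) = of_int k * f 2 x" using fsm by simp
  have fi2: "\<And>x. x \<in> H2 \<Longrightarrow> f 2 x \<in> \<int>" using cint G2 unfolding f_def by auto
  obtain g2 where g2: "g2 \<in> H2" "f 2 g2 > 0" "\<forall>x\<in>H2. \<exists>k::int. f 2 x = of_int k * f 2 g2"
    using level_lemma[of H2 "f 2" v2, OF add2 sm2 fa2 fs2 fi2 vH(1) f3(2)] by blast
  have fa1: "\<And>x y. x \<in> H1 \<Longrightarrow> y \<in> H1 \<Longrightarrow> f 1 (x + y) = f 1 x + f 1 y" using fadd by simp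
  have fs1: "\<And>x k. x \<in> H1 \<Longrightarrow> f 1 (qsmul (of_int k) x) = of_int k * f 1 x" using fsm by simp
  have fi1: "\<And>x. x \<in> H1 \<Longrightarrow> f 1 x \<in> \<int>" using cint G2 unfolding f_def by auto
  obtain g1 where g1: "g1 \<in> H1" "f 1 g1 > 0" "\<forall>x\<in>H1. \<exists>k::int. f 1 x = of_int k * f 1 g1"
    using level_lemma[of H1 "f 1" v1, OF add1 sm1 fa1 fs1 fi1 vH(2) f3(3)] by blast
  have fa0: "\<And>x y. x \<in> H0 \<Longrightarrow> y \<in> H0 \<Longrightarrow> f 0 (x + y) = f 0 x + f 0 y" using fadd by simp
  have fs0: "\<And>x k. x \<in> H0 \<Longrightarrow> f 0 (qsmul (of_int k) x) = of_int k * f 0 x" using fsm by simp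
  have fi0: "\<And>x. x \<in> H0 \<Longrightarrow> f 0 x \<in> \<int>" using cint G2 unfolding f_def by auto
  obtain g0 where g0: "g0 \<in> H0" "f 0 g0 > 0" "\<forall>x\<in>H0. \<exists>k::int. f 0 x = of_int k * f 0 g0"
    using level_lemma[of H0 "f 0" v0, OF add0 sm0 fa0 fs0 fi0 vH(3) f3(4)] by blast
  have gG: "g0 \<in> G" "g1 \<in> G" "g2 \<in> G" "g3 \<in> G" using g0(1) g1(1) g2(1) g3(1) G2 by auto
  have gz: "co g2 3 = 0" "co g1 3 = 0" "co g1 2 = 0" "co g0 3 = 0" "co g0 2 = 0" "co g0 1 = 0"
    using g0(1) g1(1) g2(1) unfolding H0_def H1_def H2_def by auto
  have gnz: "co g3 3 \<noteq> 0" "co g2 2 \<noteq> 0" "co g1 1 \<noteq> 0" "co g0 0 \<noteq> 0"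
    using g0(2) g1(2) g2(2) g3(2) unfolding f_def by auto
  have "G = lat g0 g1 g2 g3"
  proof
    show "lat g0 g1 g2 g3 \<subseteq> G"
    proof
      fix x assume "x \<in> lat g0 g1 g2 g3"
      then obtain n0 n1 n2 n3 :: int where x: "x = qcomb g0 g1 g2 g3 (of_int n0) (of_int n1) (of_int n2) (of_int n3)" by (rule lat_E)
      show "x \<in> G" unfolding x qcomb_def qadd_eq using gG by (intro add sm)
    qed
  next
    show "G \<subseteq> lat g0 g1 g2 g3"
    proof
      fix x assume x: "x \<in> G"
      obtain k3 where k3: "f 3 x = of_int k3 * f 3 g3" using g3(3) x by blast
      define x2 where "x2 = x + qsmul (of_int (- k3)) g3"
      have "co x2 3 = 0" using k3 m unfolding x2_def f_def by (simp add: co_addI co_smulI)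
      then have x2: "x2 \<in> H2" unfolding H2_def x2_def using diff[OF x gG(4)] by simp
      obtain k2 where k2: "f 2 x2 = of_int k2 * f 2 g2" using g2(3) x2 by blast
      define x1 where "x1 = x2 + qsmul (of_int (- k2)) g2"
      have "co x1 3 = 0" "co x1 2 = 0" using k2 m x2 gz unfolding x1_def f_def H2_def by (simp_all add: co_addI co_smulI)
      then have x1: "x1 \<in> H1" unfolding H1_def x1_def using diff[OF _ gG(3)] x2 G2 by auto
      obtain k1 where k1: "f 1 x1 = of_int k1 * f 1 g1" using g1(3) x1 by blast
      define x0 where "x0 = x1 + qsmul (of_int (- k1)) g1"
      have "co x0 3 = 0" "co x0 2 = 0" "co x0 1 = 0" using k1 m x1 gz unfolding x0_def f_def H1_def by (simp_all add: co_addI co_smulI)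
      then have x0: "x0 \<in> H0" unfolding H0_def x0_def using diff[OF _ gG(2)] x1 G2 by auto
      obtain k0 where k0: "f 0 x0 = of_int k0 * f 0 g0" using g0(3) x0 by blast
      define y where "y = x0 + qsmul (of_int (- k0)) g0"
      have "co y 0 = 0" "co y 1 = 0" "co y 2 = 0" "co y 3 = 0"
        using k0 m x0 gz unfolding y_def f_def H0_def by (simp_all add: co_addI co_smulI)
      then have y0: "y = 0" by (rule co_zero)
      have "x = y + qsmul (of_int k0) g0 + qsmul (of_int k1) g1 + qsmul (of_int k2) g2 + qsmul (of_int k3) g3"
        unfolding y_def x0_def x1_def x2_def qsmul_neg2 of_int_minus by (simp add: algebra_simps)
      then have "x = qcomb g0 g1 g2 g3 (of_int k0) (of_int k1) (of_int k2) (of_int k3)"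
        unfolding y0 qcomb_def qadd_eq by (simp add: algebra_simps)
      then show "x \<in> lat g0 g1 g2 g3" by (simp add: lat_memI)
    qed
  qed
  moreover have "qindep g0 g1 g2 g3"
    unfolding qindep_def
  proof (intro allI impI)
    fix c0 c1 c2 c3 assume q0: "qcomb g0 g1 g2 g3 c0 c1 c2 c3 = qzero"
    have cq: "co (qcomb g0 g1 g2 g3 c0 c1 c2 c3) i = c0 * co g0 i + c1 * co g1 i + c2 * co g2 i + c3 * co g3 i" if "i < 4" for i
      unfolding qcomb_def qadd_eq using that by (simp add: co_addI co_smulI)
    have z: "c0 * co g0 i + c1 * co g1 i + c2 * co g2 i + c3 * co g3 i = 0" if "i < 4" for i
      using cq[OF that] co_0[OF that] q0 by (simp add: qzero_eq)
    have 3: "c3 = 0" using z[of 3] gz gnz by simp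
    have 2: "c2 = 0" using z[of 2] gz gnz 3 by simp
    have 1: "c1 = 0" using z[of 1] gz gnz 3 2 by simp
    have 0: "c0 = 0" using z[of 0] gz gnz 3 2 1 by simp
    show "c0 = 0 \<and> c1 = 0 \<and> c2 = 0 \<and> c3 = 0" using 0 1 2 3 by simp
  qed
  ultimately show ?thesis unfolding is_lattice_iff by blast
qed

lemma prim_vec2:
  fixes p :: int and w :: quat
  assumes pp: "prime p" and m: "m < 4" "qc w m \<noteq> 0"
  shows "\<exists>x0 x1 x2 x3 :: int. \<exists>mu. \<not> (p dvd x0 \<and> p dvd x1 \<and> p dvd x2 \<and> p dvd x3) \<and>
     Quat (of_int x0) (of_int x1) (of_int x2) (of_int x3) = qsmul mu w"
proof -
  obtain D where D: "D > 0" "\<forall>q\<in>set [qc w 0, qc w 1, qc w 2, qc w 3]. of_int D * q \<in> \<int>" using common_denom by blast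
  obtain W0 W1 W2 W3 where W: "of_int D * qc w 0 = of_int W0" "of_int D * qc w 1 = of_int W1" "of_int D * qc w 2 = of_int W2" "of_int D * qc w 3 = of_int W3"
    using D(2) by (auto elim!: Ints_cases)
  define g where "g = gcd (gcd (gcd W0 W1) W2) W3"
  have gd: "g dvd W0" "g dvd W1" "g dvd W2" "g dvd W3" unfolding g_def by (meson dvd_trans gcd_dvd1 gcd_dvd2)+
  have Wn: "\<not> (W0 = 0 \<and> W1 = 0 \<and> W2 = 0 \<and> W3 = 0)"
  proof
    assume "W0 = 0 \<and> W1 = 0 \<and> W2 = 0 \<and> W3 = 0"
    then have "qc w 0 = 0" "qc w 1 = 0" "qc w 2 = 0" "qc w 3 = 0" using W D(1) by auto
    then show False using m lt4[of m] by auto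
  qed
  have g0: "g > 0"
  proof -
    have "g \<noteq> 0" using Wn unfolding g_def by simp
    then show ?thesis unfolding g_def by simp
  qed
  obtain X0 X1 X2 X3 where X: "W0 = g * X0" "W1 = g * X1" "W2 = g * X2" "W3 = g * X3" using gd by (metis dvdE)
  have prim: "\<not> (p dvd X0 \<and> p dvd X1 \<and> p dvd X2 \<and> p dvd X3)"
  proof
    assume "p dvd X0 \<and> p dvd X1 \<and> p dvd X2 \<and> p dvd X3"
    then have "p * g dvd X0 * g" "p * g dvd X1 * g" "p * g dvd X2 * g" "p * g dvd X3 * g"
      by (meson dvd_refl mult_dvd_mono)+
    then have "p * g dvd W0" "p * g dvd W1" "p * g dvd W2" "p * g dvd W3" unfolding X by (simp_all only: mult.commute)
    then have "p * g dvd g" unfolding g_def by (meson gcd_greatest)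
    then have "p * g \<le> g" using g0 by (simp add: zdvd_imp_le)
    moreover have "p > 1" using pp prime_gt_1_int by blast
    then have "1 * g < p * g" using g0 by (intro mult_strict_right_mono) auto
    ultimately show False by simp
  qed
  define mu where "mu = of_int D / (of_int g :: rat)"
  have Xmu: "Quat (of_int X0) (of_int X1) (of_int X2) (of_int X3) = qsmul mu w"
  proof (cases w)
    case (Quat w0 w1 w2 w3)
    have gq: "(of_int g :: rat) \<noteq> 0" using g0 by simp
    have "of_int X0 = mu * w0" "of_int X1 = mu * w1" "of_int X2 = mu * w2" "of_int X3 = mu * w3"
      unfolding mu_def using scal_help[OF _ gq] W X unfolding Quat by simp_all
    then show ?thesis using Quat by simp
  qed
  show ?thesis using prim Xmu by blast
qed

locale mo = setting +
  fixes Om :: "quat set"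
  assumes maxo: "is_maximal_order a b Om"
begin

lemma ordO: "is_order a b Om" using maxo unfolding is_maximal_order_def by blast
lemma Om_max: "is_order a b O' \<Longrightarrow> Om \<subseteq> O' \<Longrightarrow> O' = Om" using maxo unfolding is_maximal_order_def by blast

lemma R_Om: "x \<in> Om \<Longrightarrow> inR x"
  unfolding inR_def using ord_norm_int[OF ordO] pd_Z[OF pp] by blast

lemma qsmul_int_Om: "x \<in> Om \<Longrightarrow> qsmul (of_int k) x \<in> Om" using ord_smul[OF ordO] .

lemma comb: assumes "qsmul (of_int s) y \<in> Om" "qsmul (of_int (p^k)) y \<in> Om" "\<not> p dvd s" shows "y \<in> Om"
proof -
  have "coprime s p" using assms(3) pp by (simp add: prime_imp_coprime coprime_commute)
  then have "coprime s (p^k)" by simp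
  then have "gcd s (p^k) = 1" by simp
  then obtain u w where uw: "u * s + w * p^k = 1" using bezout_int[of s "p^k"] by auto
  have "y = qsmul (of_int (u * s + w * p^k)) y" unfolding uw by (simp add: qsmul_1)
  also have "\<dots> = qsmul (of_int u) (qsmul (of_int s) y) + qsmul (of_int w) (qsmul (of_int (p^k)) y)"
    by (simp add: qsmul_add2 qsmul_smul)
  also have "\<dots> \<in> Om" by (rule ord_add[OF ordO qsmul_int_Om[OF assms(1)] qsmul_int_Om[OF assms(2)]])
  finally show ?thesis .
qed

lemma bounded: "\<exists>c. \<forall>z. inR z \<longrightarrow> (\<exists>s. \<not> p dvd s \<and> qsmul (of_int (s * p^c)) z \<in> Om)"
proof -
  obtain n0 where n0: "\<And>x0 x1 x2 x3. \<not> (p dvd x0 \<and> p dvd x1 \<and> p dvd x2 \<and> p dvd x3) \<Longrightarrow>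
      \<not> padic_dvd p n0 (qnorm a b (Quat (of_int x0) (of_int x1) (of_int x2) (of_int x3)))"
    using ram_p unfolding ram_at_def by blast
  obtain v0 v1 v2 v3 where ind: "qindep v0 v1 v2 v3" and L: "Om = lat v0 v1 v2 v3"
    using ordL[OF ordO] unfolding is_lattice_iff by blast
  obtain D where D: "D > 0" "\<And>X. (\<forall>i<4. qc X i \<in> \<int>) \<Longrightarrow> qsmul (of_int D) X \<in> Om"
    using lat_contains_scaled[OF ind] L by blast
  obtain dl D' where D': "D = p^dl * D'" "\<not> p dvd D'" using decomp[OF pp, of D] D(1) by auto
  have "\<exists>s. \<not> p dvd s \<and> qsmul (of_int (s * p^(n0 + dl))) z \<in> Om" if z: "inR z" for z
  proof (cases "z = 0")
    case True then show ?thesis using ord_0[OF ordO] p_nunit[OF pp] by (intro exI[of _ 1]) (simp add: qsmul_zero)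
  next
    case False
    have qc0: "qc 0 i = 0" for i by (simp add: quat_zero)
    have "\<exists>m<4. qc z m \<noteq> 0" using False quat_eq_qc[of z 0] unfolding qc0 by blast
    then obtain m where m: "m < 4" "qc z m \<noteq> 0" by blast
    obtain x0 x1 x2 x3 :: int and mu where X: "\<not> (p dvd x0 \<and> p dvd x1 \<and> p dvd x2 \<and> p dvd x3)"
      "Quat (of_int x0) (of_int x1) (of_int x2) (of_int x3) = qsmul mu z"
      using prim_vec2[OF pp m] by blast
    have mu0: "mu \<noteq> 0"
    proof
      assume "mu = 0"
      then have "x0 = 0" "x1 = 0" "x2 = 0" "x3 = 0" using X(2) by (cases z; simp)+
      then show False using X(1) by simp
    qed
    have NX: "qnorm a b (Quat (of_int x0) (of_int x1) (of_int x2) (of_int x3)) = mu * mu * qnorm a b z"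
      unfolding X(2) qnorm_smul by (simp add: power2_eq_square)
    have "\<not> padic_dvd p n0 mu"
    proof
      assume "padic_dvd p n0 mu"
      then have "padic_dvd p (n0 + n0 + 0) (mu * mu * qnorm a b z)"
        using pd_mult[OF pp pd_mult[OF pp] z[unfolded inR_def]] by blast
      then have "padic_dvd p n0 (mu * mu * qnorm a b z)" using pd_mono[OF pp, of n0 "n0+n0+0"] by simp
      then show False using n0[OF X(1)] NX by simp
    qed
    then have "padic_dvd p 1 (of_int (p^n0) / mu)" using pd_dich[OF pp mu0] by blast
    then obtain r s where rs: "\<not> p dvd s" "of_int (p^n0) / mu = of_int (p^1) * of_int r / of_int s" unfolding padic_dvd_def by blast
    have s0: "(of_int s :: rat) \<noteq> 0" using rs(1) by auto
    have nu: "of_int s * (of_int (p^n0) / mu) = of_int (p * r)" using rs(2) s0 by simp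
    have "qsmul (of_int s * of_int (p^n0)) z = qsmul (of_int s * (of_int (p^n0) / mu)) (qsmul mu z)"
      using mu0 by (simp add: qsmul_smul)
    also have "\<dots> = qsmul (of_int (p * r)) (Quat (of_int x0) (of_int x1) (of_int x2) (of_int x3))"
      unfolding nu X(2) ..
    finally have eqz: "qsmul (of_int (s * p^n0)) z = Quat (of_int (p*r*x0)) (of_int (p*r*x1)) (of_int (p*r*x2)) (of_int (p*r*x3))"
      by simp
    have "qsmul (of_int D) (qsmul (of_int (s * p^n0)) z) \<in> Om" unfolding eqz
      by (rule D(2)) (auto dest!: lt4)
    moreover have "qsmul (of_int D) (qsmul (of_int (s * p^n0)) z) = qsmul (of_int ((D' * s) * p^(n0 + dl))) z"
      unfolding D'(1) by (simp add: qsmul_smul power_add algebra_simps)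
    ultimately have "qsmul (of_int ((D' * s) * p^(n0 + dl))) z \<in> Om" by simp
    moreover have "\<not> p dvd D' * s" using ndvd_mult[OF pp D'(2) rs(1)] .
    ultimately show ?thesis by blast
  qed
  then show ?thesis by blast
qed

definition Ostar :: "quat set" where "Ostar = {z. inR z \<and> (\<exists>k. qsmul (of_int (p^k)) z \<in> Om)}"

lemma Om_Ostar: "x \<in> Om \<Longrightarrow> x \<in> Ostar"
proof -
  assume x: "x \<in> Om"
  have "qsmul (of_int (p^0)) x \<in> Om" using x by (simp add: qsmul_1)
  then show ?thesis unfolding Ostar_def using R_Om[OF x] by blast
qed

lemma Ostar_add: assumes "x \<in> Ostar" "y \<in> Ostar" shows "x + y \<in> Ostar"
proof -
  obtain k1 k2 where k: "qsmul (of_int (p^k1)) x \<in> Om" "qsmul (of_int (p^k2)) y \<in> Om" using assms unfolding Ostar_def by blast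
  have e: "(of_int (p^(k1+k2)) :: rat) = of_int (p^k2) * of_int (p^k1)" "(of_int (p^(k1+k2)) :: rat) = of_int (p^k1) * of_int (p^k2)"
    by (simp_all add: power_add)
  have "qsmul (of_int (p^(k1+k2))) (x + y) = qsmul (of_int (p^k2)) (qsmul (of_int (p^k1)) x) + qsmul (of_int (p^k1)) (qsmul (of_int (p^k2)) y)"
    unfolding qsmul_add qsmul_smul using e by metis
  also have "\<dots> \<in> Om" by (rule ord_add[OF ordO qsmul_int_Om[OF k(1)] qsmul_int_Om[OF k(2)]])
  finally show ?thesis using assms R_add unfolding Ostar_def by blast
qed

lemma Ostar_smul: assumes "x \<in> Ostar" shows "qsmul (of_int k) x \<in> Ostar"
proof -
  obtain k1 where k: "qsmul (of_int (p^k1)) x \<in> Om" using assms unfolding Ostar_def by blast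
  have "qsmul (of_int (p^k1)) (qsmul (of_int k) x) = qsmul (of_int k) (qsmul (of_int (p^k1)) x)"
    by (simp add: qsmul_smul mult.commute)
  also have "\<dots> \<in> Om" using k by (rule qsmul_int_Om)
  finally have "qsmul (of_int (p^k1)) (qsmul (of_int k) x) \<in> Om" .
  moreover have "inR (qsmul (of_int k) x)" using R_smul[OF pd_Z[OF pp Ints_of_int]] assms unfolding Ostar_def by blast
  ultimately show ?thesis unfolding Ostar_def by blast
qed

lemma Ostar_mul: assumes "x \<in> Ostar" "y \<in> Ostar" shows "qmul a b x y \<in> Ostar"
proof -
  obtain k1 k2 where k: "qsmul (of_int (p^k1)) x \<in> Om" "qsmul (of_int (p^k2)) y \<in> Om" using assms unfolding Ostar_def by blast
  have e: "(of_int (p^(k1+k2)) :: rat) = of_int (p^k2) * of_int (p^k1)"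
    by (simp add: power_add)
  have "qsmul (of_int (p^(k1+k2))) (qmul a b x y) = qmul a b (qsmul (of_int (p^k1)) x) (qsmul (of_int (p^k2)) y)"
    unfolding qmul_smul_left qmul_smul_right qsmul_smul e ..
  also have "\<dots> \<in> Om" using k by (rule ord_mul[OF ordO])
  finally show ?thesis using assms R_mul unfolding Ostar_def by blast
qed

lemma MAX: assumes z: "inR z" shows "\<exists>s. \<not> p dvd s \<and> qsmul (of_int s) z \<in> Om"
proof (rule ccontr)
  assume nz: "\<not> ?thesis"
  obtain c where c: "\<And>z. inR z \<Longrightarrow> \<exists>s. \<not> p dvd s \<and> qsmul (of_int (s * p^c)) z \<in> Om" using bounded by blast
  have cb: "qsmul (of_int (p^c)) y \<in> Om" if y: "y \<in> Ostar" for y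
  proof -
    obtain s where s: "\<not> p dvd s" "qsmul (of_int (s * p^c)) y \<in> Om" using c y unfolding Ostar_def by blast
    obtain k where k: "qsmul (of_int (p^k)) y \<in> Om" using y unfolding Ostar_def by blast
    have "qsmul (of_int s) (qsmul (of_int (p^c)) y) \<in> Om" using s(2) by (simp add: qsmul_smul)
    moreover have "qsmul (of_int (p^k)) (qsmul (of_int (p^c)) y) \<in> Om"
      using qsmul_int_Om[OF k, of "p^c"] by (simp add: qsmul_smul mult.commute)
    ultimately show ?thesis using comb s(1) by blast
  qed
  obtain s0 where s0: "\<not> p dvd s0" "qsmul (of_int (s0 * p^c)) z \<in> Om" using c z by blast
  define z1 where "z1 = qsmul (of_int s0) z"
  have z1: "z1 \<in> Ostar" unfolding Ostar_def z1_def using s0(2) R_smul[OF pd_Z[OF pp] z]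
    by (auto intro!: exI[of _ c] simp: qsmul_smul mult.commute)
  have z1n: "z1 \<notin> Om" using nz s0(1) unfolding z1_def by blast
  define P where "P = (\<lambda>k. \<forall>y\<in>Ostar. qsmul (of_int (p^k)) y \<in> Om)"
  have Pc: "P c" unfolding P_def using cb by blast
  define c' where "c' = Least P"
  have Pc': "P c'" unfolding c'_def using Pc by (rule LeastI)
  have c'1: "c' \<noteq> 0"
  proof
    assume "c' = 0" then have "z1 \<in> Om" using Pc' z1 unfolding P_def by (simp add: qsmul_1)
    then show False using z1n by simp
  qed
  have "\<not> P (c' - 1)"
  proof
    assume "P (c' - 1)" then have "c' \<le> c' - 1" unfolding c'_def by (rule Least_le)
    then show False using c'1 by simp
  qed
  then obtain y0 where y0: "y0 \<in> Ostar" "qsmul (of_int (p^(c'-1))) y0 \<notin> Om" unfolding P_def by blast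
  define e where "e = c' - 1"
  have ce: "c' = e + 1" using c'1 unfolding e_def by simp
  define O1 where "O1 = {x + qsmul (of_int (p^e)) y | x y. x \<in> Om \<and> y \<in> Ostar}"
  have OmO1: "Om \<subseteq> O1"
  proof
    fix x assume "x \<in> Om"
    moreover have "x = x + qsmul (of_int (p^e)) 0" by (simp add: qsmul_zero)
    ultimately show "x \<in> O1" unfolding O1_def using Om_Ostar[OF ord_0[OF ordO]] by blast
  qed
  have O1add: "x + y \<in> O1" if th: "x \<in> O1" "y \<in> O1" for x y
  proof -
    obtain x1 y1 where 1: "x = x1 + qsmul (of_int (p^e)) y1" "x1 \<in> Om" "y1 \<in> Ostar" using th(1) unfolding O1_def by blast
    obtain x2 y2 where 2: "y = x2 + qsmul (of_int (p^e)) y2" "x2 \<in> Om" "y2 \<in> Ostar" using th(2) unfolding O1_def by blast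
    have "x + y = (x1 + x2) + qsmul (of_int (p^e)) (y1 + y2)" unfolding 1 2 by (simp add: qsmul_add algebra_simps)
    then show ?thesis unfolding O1_def using ord_add[OF ordO 1(2) 2(2)] Ostar_add[OF 1(3) 2(3)] by blast
  qed
  have O1sm: "qsmul (of_int k) x \<in> O1" if th: "x \<in> O1" for x k
  proof -
    obtain x1 y1 where 1: "x = x1 + qsmul (of_int (p^e)) y1" "x1 \<in> Om" "y1 \<in> Ostar" using th(1) unfolding O1_def by blast
    have "qsmul (of_int k) x = qsmul (of_int k) x1 + qsmul (of_int (p^e)) (qsmul (of_int k) y1)" unfolding 1 by (simp add: qsmul_add qsmul_smul mult.commute)
    then show ?thesis unfolding O1_def using qsmul_int_Om[OF 1(2)] Ostar_smul[OF 1(3)] by blast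
  qed
  have O1mul: "qmul a b x y \<in> O1" if th: "x \<in> O1" "y \<in> O1" for x y
  proof -
    obtain x1 y1 where 1: "x = x1 + qsmul (of_int (p^e)) y1" "x1 \<in> Om" "y1 \<in> Ostar" using th(1) unfolding O1_def by blast
    obtain x2 y2 where 2: "y = x2 + qsmul (of_int (p^e)) y2" "x2 \<in> Om" "y2 \<in> Ostar" using th(2) unfolding O1_def by blast
    have "qmul a b x y = qmul a b x1 x2 + qsmul (of_int (p^e)) (qmul a b y1 x2 + qmul a b x1 y2 + qsmul (of_int (p^e)) (qmul a b y1 y2))"
      unfolding 1 2 by (simp add: qmul_add_left qmul_add_right qmul_smul_left qmul_smul_right qsmul_add qsmul_smul algebra_simps)
    moreover have "qmul a b y1 x2 + qmul a b x1 y2 + qsmul (of_int (p^e)) (qmul a b y1 y2) \<in> Ostar"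
      using 1 2 Om_Ostar by (intro Ostar_add Ostar_mul Ostar_smul) auto
    ultimately show ?thesis unfolding O1_def using ord_mul[OF ordO 1(2) 2(2)] by blast
  qed
  obtain v0 v1 v2 v3 where ind: "qindep v0 v1 v2 v3" and L: "Om = lat v0 v1 v2 v3"
    using ordL[OF ordO] unfolding is_lattice_iff by blast
  have O1sup: "qsmul (of_int p) x \<in> lat v0 v1 v2 v3" if th: "x \<in> O1" for x
  proof -
    obtain x1 y1 where 1: "x = x1 + qsmul (of_int (p^e)) y1" "x1 \<in> Om" "y1 \<in> Ostar" using th(1) unfolding O1_def by blast
    have "qsmul (of_int p) x = qsmul (of_int p) x1 + qsmul (of_int (p^c')) y1" unfolding 1 ce by (simp add: qsmul_add qsmul_smul)
    also have "\<dots> \<in> Om" using Pc' 1(3) unfolding P_def by (intro ord_add[OF ordO qsmul_int_Om[OF 1(2)]]) auto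
    finally show ?thesis using L by simp
  qed
  have "is_lattice O1" using sub_lattice[OF ind O1add O1sm _ O1sup] OmO1 L p_pos[OF pp] by auto
  moreover have "qone \<in> O1" using OmO1 ord_one[OF ordO] by blast
  ultimately have "is_order a b O1" unfolding is_order_def using O1mul by blast
  then have "O1 = Om" using Om_max OmO1 by blast
  moreover have "qsmul (of_int (p^e)) y0 \<in> O1" unfolding O1_def using ord_0[OF ordO] y0(1) by force
  ultimately show False using y0(2) unfolding e_def by simp
qed

lemma F_sq: assumes u: "u \<in> Om" "padic_dvd p 1 (qnorm a b u)" and w: "w \<in> Om" "padic_dvd p 1 (qnorm a b w)"
  shows "\<exists>oo\<in>Om. qmul a b u w = qsmul (of_int p) oo"
proof -
  define z where "z = qsmul (1 / of_int p) (qmul a b u w)"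
  have "qnorm a b z = qnorm a b (qmul a b u w) / of_int p ^ 2" unfolding z_def qnorm_smul by (simp add: power_divide)
  moreover have "padic_dvd p (1 + 1) (qnorm a b (qmul a b u w))" unfolding qnorm_mult using pd_mult[OF pp u(2) w(2)] .
  ultimately have "inR z" unfolding inR_def using pd_div_p2 by (simp only: one_add_one)
  then obtain s where s: "\<not> p dvd s" "qsmul (of_int s) z \<in> Om" using MAX by blast
  have pz: "qsmul (of_int p) z = qmul a b u w" unfolding z_def using p_pos[OF pp] by (simp add: qsmul_smul qsmul_1)
  have "qsmul (of_int (p^1)) z \<in> Om" using pz ord_mul[OF ordO u(1) w(1)] by simp
  then have "z \<in> Om" using comb[OF s(2) _ s(1)] by blast
  then show ?thesis using pz by (intro bexI[of _ z]) auto
qed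

end

lemma sq_inj:
  fixes p x y :: int
  assumes pp: "prime p" and x: "0 \<le> x" "x \<le> (p - 1) div 2" and y: "0 \<le> y" "y \<le> (p - 1) div 2"
    and d: "p dvd x^2 - y^2"
  shows "x = y"
proof -
  have "x^2 - y^2 = (x - y) * (x + y)" by (simp add: algebra_simps power2_eq_square)
  then have "p dvd (x - y) \<or> p dvd (x + y)" using d pp by (simp add: prime_dvd_mult_iff)
  then show ?thesis
  proof
    assume "p dvd x - y"
    show ?thesis
    proof (rule ccontr)
      assume "x \<noteq> y"
      then have "\<bar>p\<bar> \<le> \<bar>x - y\<bar>" using dvd_imp_le_int \<open>p dvd x - y\<close> by simp
      moreover have "p > 0" using pp prime_gt_0_int by blast
      ultimately show False using x y by linarith
    qed
  next
    assume "p dvd x + y"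
    show ?thesis
    proof (rule ccontr)
      assume "x \<noteq> y"
      then have "x + y \<noteq> 0" using x y by linarith
      then have "\<bar>p\<bar> \<le> \<bar>x + y\<bar>" using dvd_imp_le_int \<open>p dvd x + y\<close> by simp
      moreover have "p > 0" using pp prime_gt_0_int by blast
      ultimately show False using x y by linarith
    qed
  qed
qed

lemma pigeon:
  fixes p A B :: int
  assumes pp: "prime p" and p2: "p > 2" and A: "\<not> p dvd A"
  shows "\<exists>X Y. p dvd (X^2 - A * Y^2 - B)"
proof -
  define h where "h = (p - 1) div 2"
  define I where "I = {0..h}"
  define f1 where "f1 = (\<lambda>x::int. x^2 mod p)"
  define f2 where "f2 = (\<lambda>y::int. (A * y^2 + B) mod p)"
  have p0: "p > 0" using pp prime_gt_0_int by blast
  have odd: "odd p" using prime_odd_int[OF pp p2] .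
  have h2: "2 * (h + 1) = p + 1" unfolding h_def using odd by (auto elim!: oddE)
  have inj1: "inj_on f1 I"
  proof (rule inj_onI)
    fix x y assume "x \<in> I" "y \<in> I" "f1 x = f1 y"
    then show "x = y" using sq_inj[OF pp, of x y] unfolding I_def h_def f1_def by (auto simp: mod_eq_dvd_iff)
  qed
  have inj2: "inj_on f2 I"
  proof (rule inj_onI)
    fix x y assume xy: "x \<in> I" "y \<in> I" "f2 x = f2 y"
    then have "p dvd (A * x^2 + B) - (A * y^2 + B)" unfolding f2_def by (simp add: mod_eq_dvd_iff)
    moreover have "(A * x^2 + B) - (A * y^2 + B) = A * (x^2 - y^2)" by (simp add: algebra_simps)
    ultimately have "p dvd A * (x^2 - y^2)" by simp
    then have "p dvd x^2 - y^2" using A pp by (simp add: prime_dvd_mult_iff)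
    then show "x = y" using sq_inj[OF pp, of x y] xy(1,2) unfolding I_def h_def by auto
  qed
  have cI: "card I = nat (h + 1)" unfolding I_def by simp
  have c1: "card (f1 ` I) = nat (h + 1)" using card_image[OF inj1] cI by simp
  have c2: "card (f2 ` I) = nat (h + 1)" using card_image[OF inj2] cI by simp
  have sub: "f1 ` I \<union> f2 ` I \<subseteq> {0..<p}" unfolding f1_def f2_def using p0 by auto
  have "card (f1 ` I \<union> f2 ` I) \<le> nat p" using card_mono[OF _ sub] by simp
  moreover have "card (f1 ` I) + card (f2 ` I) = card (f1 ` I \<union> f2 ` I) + card (f1 ` I \<inter> f2 ` I)"
    by (rule card_Un_Int) (auto simp: I_def)
  moreover have "card (f1 ` I) + card (f2 ` I) = nat p + 1"
  proof -
    have hge: "h \<ge> 0" unfolding h_def using p2 by simp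
    have "int (card (f1 ` I) + card (f2 ` I)) = int (nat p + 1)" using c1 c2 h2 hge p0 by simp
    then show ?thesis by (simp only: of_nat_eq_iff)
  qed
  ultimately have "card (f1 ` I \<inter> f2 ` I) > 0" by linarith
  then obtain z where "z \<in> f1 ` I \<inter> f2 ` I" by (metis card.empty ex_in_conv less_irrefl)
  then obtain X Y where "f1 X = f2 Y" by auto
  then have "p dvd X^2 - (A * Y^2 + B)" unfolding f1_def f2_def by (simp add: mod_eq_dvd_iff)
  then show ?thesis by (intro exI[of _ X] exI[of _ Y]) (simp add: algebra_simps)
qed

context setting
begin

lemma hensel:
  assumes al: "padic_dvd p 0 al" and be: "padic_dvd p 0 be" and u: "padic_dvd p 0 u"
    and u1: "2 * al * x0 * u = 1" and F0: "padic_dvd p 1 (al * x0^2 + be)"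
  shows "\<exists>x. padic_dvd p n (al * x^2 + be)"
proof -
  define F where "F = (\<lambda>x. al * x^2 + be)"
  define xs where "xs = rec_nat x0 (\<lambda>_ x. x - F x * u)"
  have xs0: "xs 0 = x0" and xsS: "\<And>k. xs (Suc k) = xs k - F (xs k) * u" unfolding xs_def by simp_all
  have inv: "padic_dvd p 1 (xs k - x0) \<and> padic_dvd p (k + 1) (F (xs k))" for k
  proof (induction k)
    case 0 then show ?case using F0 pd_0[OF pp] unfolding F_def xs0 by simp
  next
    case (Suc k)
    define x where "x = xs k"
    have IH1: "padic_dvd p 1 (x - x0)" and IH2: "padic_dvd p (k + 1) (F x)" using Suc unfolding x_def by auto
    have F1: "padic_dvd p 1 (F x)" using pd_mono[OF pp _ IH2, of 1] by simp
    have "padic_dvd p (1 + 0) (F x * u)" using pd_mult[OF pp F1 u] .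
    then have A: "padic_dvd p 1 (xs (Suc k) - x0)" unfolding xsS x_def[symmetric]
      using pd_diff[OF pp IH1, of "F x * u"] by (simp add: algebra_simps)
    have eq: "F (xs (Suc k)) = F x * ((2 * al * u) * (x0 - x)) + (al * u * u) * (F x * F x)"
    proof -
      have "F (xs (Suc k)) = F x * (1 - 2 * al * x * u) + (al * u * u) * (F x * F x)"
        unfolding xsS x_def[symmetric] by (simp add: F_def algebra_simps power2_eq_square)
      also have "1 - 2 * al * x * u = (2 * al * u) * (x0 - x)" using u1 by (simp add: algebra_simps)
      finally show ?thesis .
    qed
    have c1: "padic_dvd p 0 (2 * al * u)" using pd_mult[OF pp pd_smul[OF pp al, of 2] u] by simp
    have "padic_dvd p 1 (x0 - x)" using pd_neg[OF pp IH1] by simp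
    then have "padic_dvd p (0 + 1) ((2 * al * u) * (x0 - x))" using pd_mult[OF pp c1] by blast
    then have "padic_dvd p ((k + 1) + (0 + 1)) (F x * ((2 * al * u) * (x0 - x)))" by (rule pd_mult[OF pp IH2])
    then have B1: "padic_dvd p ((k + 1) + 1) (F x * ((2 * al * u) * (x0 - x)))" by (simp only: add_0)
    have c2: "padic_dvd p 0 (al * u * u)" using pd_mult[OF pp pd_mult[OF pp al u] u] by simp
    have "padic_dvd p ((k + 1) + (k + 1)) (F x * F x)" using pd_mult[OF pp IH2 IH2] .
    then have "padic_dvd p (0 + ((k + 1) + (k + 1))) ((al * u * u) * (F x * F x))" using pd_mult[OF pp c2] by blast
    moreover have le: "(k + 1) + 1 \<le> 0 + ((k + 1) + (k + 1))" by simp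
    ultimately have B2: "padic_dvd p ((k + 1) + 1) ((al * u * u) * (F x * F x))" using pd_mono[OF pp le] by blast
    have "padic_dvd p (Suc k + 1) (F (xs (Suc k)))" unfolding eq using pd_add[OF pp B1 B2] by simp
    then show ?case using A by simp
  qed
  have "padic_dvd p n (F (xs n))" using inv[of n] pd_mono[OF pp, of n "n+1"] by simp
  then show ?thesis unfolding F_def by blast
qed

end

context setting
begin

lemma normalize_val: fixes c :: rat assumes c0: "c \<noteq> 0"
  shows "\<exists>lam j r s. lam \<noteq> 0 \<and> j \<le> 1 \<and> \<not> p dvd r \<and> \<not> p dvd s \<and> c * lam^2 = of_int (p^j) * of_int r / of_int s"
proof -
  obtain k m r s where ers: "\<not> p dvd r" "\<not> p dvd s" "c * of_int (p^m * s) = of_int (p^k * r)"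
    using pd_exact[OF pp c0] by blast
  define t where "t = (k + m) div 2"
  define j where "j = (k + m) mod 2"
  have kmt: "k + m = t + t + j" unfolding t_def j_def by presburger
  have j1: "j \<le> 1" unfolding j_def by simp
  have p0: "(of_int p :: rat) \<noteq> 0" using p_pos[OF pp] by simp
  have s0: "(of_int s :: rat) \<noteq> 0" using ers(2) by auto
  define lam where "lam = (of_int p :: rat) ^ m / of_int p ^ t"
  have lam0: "lam \<noteq> 0" unfolding lam_def using p0 by simp
  have "c * lam^2 * (of_int s * of_int p ^ t * of_int p ^ t) = (c * of_int (p^m * s)) * of_int p ^ m"
    unfolding lam_def using p0 by (simp add: power2_eq_square field_simps)
  also have "\<dots> = of_int p ^ (k + m) * of_int r" unfolding ers(3) by (simp add: power_add)
  also have "\<dots> = (of_int p ^ j * of_int r / of_int s) * (of_int s * of_int p ^ t * of_int p ^ t)"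
    unfolding kmt using s0 by (simp add: power_add field_simps)
  finally have "c * lam^2 * (of_int s * of_int p ^ t * of_int p ^ t) = (of_int p ^ j * of_int r / of_int s) * (of_int s * of_int p ^ t * of_int p ^ t)" .
  moreover have "(of_int s * of_int p ^ t * of_int p ^ t :: rat) \<noteq> 0" using s0 p0 by simp
  ultimately have "c * lam^2 = of_int p ^ j * of_int r / of_int s" using mult_right_cancel by blast
  then show ?thesis using lam0 j1 ers(1,2) by (intro exI[of _ lam] exI[of _ j] exI[of _ r] exI[of _ s]) simp
qed

lemma val1_elem: assumes "c * lam^2 = of_int (p^1) * of_int r / of_int s" "\<not> p dvd r" "\<not> p dvd s"
  and N: "qnorm a b x = - (c * lam^2)"
  shows "padic_dvd p 1 (qnorm a b x) \<and> \<not> padic_dvd p 2 (qnorm a b x)"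
proof -
  have N': "qnorm a b x = of_int (p^1) * of_int (- r) / of_int s" using N assms(1) by simp
  have "padic_dvd p 1 (qnorm a b x)" using pd_intro[OF pp assms(3) N'] .
  moreover have "\<not> padic_dvd p 2 (qnorm a b x)"
  proof
    assume "padic_dvd p 2 (qnorm a b x)"
    moreover have "qnorm a b x * of_int (p^0 * s) = of_int (p^1 * (- r))" using N' assms(3) by auto
    moreover have "\<not> p dvd - r" using assms(2) by simp
    ultimately have "2 + 0 \<le> (1::nat)" using pd_exact_le[OF pp, of "- r" s "qnorm a b x" 0 1 2] assms(3) by blast
    then show False by simp
  qed
  ultimately show ?thesis by blast
qed

lemma unit_not_p: assumes "a' * of_int (p^0 * s) = of_int (p^0 * r)" "\<not> p dvd r" "\<not> p dvd s"
  shows "\<not> padic_dvd p 1 a'"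
proof
  assume "padic_dvd p 1 a'"
  then have "1 + 0 \<le> (0::nat)" using pd_exact_le[OF pp assms(2,3,1)] by blast
  then show False by simp
qed

lemma pi0: "\<exists>x. padic_dvd p 1 (qnorm a b x) \<and> \<not> padic_dvd p 2 (qnorm a b x)"
proof -
  obtain la ja ra sa where A: "la \<noteq> 0" "ja \<le> 1" "\<not> p dvd ra" "\<not> p dvd sa" "a * la^2 = of_int (p^ja) * of_int ra / of_int sa"
    using normalize_val[OF a0] by blast
  obtain lb jb rb sb where B: "lb \<noteq> 0" "jb \<le> 1" "\<not> p dvd rb" "\<not> p dvd sb" "b * lb^2 = of_int (p^jb) * of_int rb / of_int sb"
    using normalize_val[OF b0] by blast
  show ?thesis
  proof (cases "ja = 1")
    case True
    have "qnorm a b (Quat 0 la 0 0) = - (a * la^2)" by simp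
    then show ?thesis using val1_elem[of a la ra sa] A True by blast
  next
    case ja: False
    show ?thesis
    proof (cases "jb = 1")
      case True
      have "qnorm a b (Quat 0 0 lb 0) = - (b * lb^2)" by simp
      then show ?thesis using val1_elem[of b lb rb sb] B True by blast
    next
      case jb: False
      have ja0: "ja = 0" and jb0: "jb = 0" using ja jb A(2) B(2) by auto
      define a' where "a' = a * la^2"
      define b' where "b' = b * lb^2"
      have sa0: "(of_int sa :: rat) \<noteq> 0" using A(4) by auto
      have sb0: "(of_int sb :: rat) \<noteq> 0" using B(4) by auto
      have a'e: "a' = of_int (p^0) * of_int ra / of_int sa" unfolding a'_def using A(5) ja0 by simp
      have b'e: "b' = of_int (p^0) * of_int rb / of_int sb" unfolding b'_def using B(5) jb0 by simp
      have a'p: "padic_dvd p 0 a'" using pd_intro[OF pp A(4) a'e] .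
      have b'p: "padic_dvd p 0 b'" using pd_intro[OF pp B(4) b'e] .
      have a'n: "\<not> padic_dvd p 1 a'" using unit_not_p[OF _ A(3,4)] a'e sa0 by simp
      have b'n: "\<not> padic_dvd p 1 b'" using unit_not_p[OF _ B(3,4)] b'e sb0 by simp
      obtain Ai where Ai: "padic_dvd p 1 (a' - of_int Ai)" using pd_approx[OF pp a'p] by blast
      obtain Bi where Bi: "padic_dvd p 1 (b' - of_int Bi)" using pd_approx[OF pp b'p] by blast
      have An: "\<not> p dvd Ai"
      proof
        assume "p dvd Ai"
        then have "padic_dvd p 1 (of_int Ai)" using pd_int[OF pp, of 1] by simp
        then have "padic_dvd p 1 ((a' - of_int Ai) + of_int Ai)" using pd_add[OF pp Ai] by blast
        then show False using a'n by simp
      qed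
      have Bn: "\<not> p dvd Bi"
      proof
        assume "p dvd Bi"
        then have "padic_dvd p 1 (of_int Bi)" using pd_int[OF pp, of 1] by simp
        then have "padic_dvd p 1 ((b' - of_int Bi) + of_int Bi)" using pd_add[OF pp Bi] by blast
        then show False using b'n by simp
      qed
      obtain X0 Y0 where XY: "p dvd X0^2 - Ai * Y0^2 - Bi" using pigeon[OF pp p2 An] by blast
      have base: "padic_dvd p 1 (of_int X0 ^ 2 - a' * of_int Y0 ^ 2 - b')"
      proof -
        have "padic_dvd p 1 (of_int (X0^2 - Ai * Y0^2 - Bi))" using pd_int[OF pp, of 1 "X0^2 - Ai * Y0^2 - Bi"] XY by (simp only: power_one_right)
        moreover have "padic_dvd p 1 (of_int (Y0^2) * (a' - of_int Ai))" using pd_smul[OF pp Ai] .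
        ultimately have "padic_dvd p 1 (of_int (X0^2 - Ai * Y0^2 - Bi) - of_int (Y0^2) * (a' - of_int Ai) - (b' - of_int Bi))"
          using pd_diff[OF pp] Bi by blast
        then show ?thesis by (simp add: algebra_simps)
      qed
      have qn: "qnorm a b (Quat x (y * la) lb 0) = x^2 - a' * y^2 - b'" for x y
        unfolding a'_def b'_def by (simp add: power_mult_distrib algebra_simps)
      have "\<not> ram_at a b p"
      proof (cases "p dvd X0")
        case False
        have u: "padic_dvd p 0 (1 / of_int (2 * X0))"
          using pd_intro[OF pp, of "2 * X0" "1 / of_int (2 * X0)" 0 1] ndvd_mult[OF pp p_ndvd2 False] by simp
        have X00: "X0 \<noteq> 0" using False by auto
        have fam: "\<exists>w. qc w 2 = lb \<and> padic_dvd p n (qnorm a b w)" for n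
        proof -
          have al: "padic_dvd p 0 (1::rat)" using pd_Z[OF pp, of 1] by simp
          have y2: "padic_dvd p 0 (of_int Y0 ^ 2)" using pd_Z[OF pp] by simp
          have m2: "padic_dvd p 0 (a' * of_int Y0 ^ 2)" using pd_mult[OF pp a'p y2] by simp
          have be: "padic_dvd p 0 (- (a' * of_int Y0 ^ 2) - b')"
            using pd_diff[OF pp pd_neg[OF pp m2] b'p] .
          have u1: "2 * 1 * of_int X0 * (1 / of_int (2 * X0)) = (1::rat)" using X00 by simp
          have F0: "padic_dvd p 1 (1 * (of_int X0)^2 + (- (a' * of_int Y0 ^ 2) - b'))" using base by (simp add: algebra_simps)
          obtain x where x: "padic_dvd p n (1 * x^2 + (- (a' * of_int Y0 ^ 2) - b'))"
            using hensel[OF al be u u1 F0] by blast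
          then show ?thesis using qn[of x "of_int Y0"] by (intro exI[of _ "Quat x (of_int Y0 * la) lb 0"]) (simp add: algebra_simps)
        qed
        show ?thesis using iso_not_ram[OF pp _ B(1) fam] by simp
      next
        case True
        have Yn: "\<not> p dvd Y0"
        proof
          assume "p dvd Y0"
          then have "p dvd X0^2 - Ai * Y0^2" using True by (simp add: power2_eq_square)
          then have "p dvd (X0^2 - Ai * Y0^2) - (X0^2 - Ai * Y0^2 - Bi)" using XY by (rule dvd_diff)
          then show False using Bn by simp
        qed
        have ra0: "ra \<noteq> 0" using A(3) by auto
        have Y00: "Y0 \<noteq> 0" using Yn by auto
        define u :: rat where "u = of_int (p^0) * of_int (- sa) / of_int (2 * ra * Y0)"
        have up: "padic_dvd p 0 u" using pd_intro[OF pp _ u_def] ndvd_mult[OF pp ndvd_mult[OF pp p_ndvd2 A(3)] Yn] by simp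
        have u1: "2 * (- a') * of_int Y0 * u = 1" unfolding u_def a'e using sa0 ra0 Y00 by simp
        have alp: "padic_dvd p 0 (- a')" using pd_neg[OF pp a'p] .
        have bep: "padic_dvd p 0 (of_int X0 ^ 2 - b')" using pd_diff[OF pp pd_Z[OF pp] b'p] by simp
        have F0: "padic_dvd p 1 (- a' * of_int Y0 ^ 2 + (of_int X0 ^ 2 - b'))" using base by (simp add: algebra_simps)
        have fam: "\<exists>w. qc w 2 = lb \<and> padic_dvd p n (qnorm a b w)" for n
        proof -
          obtain y where y: "padic_dvd p n (- a' * y^2 + (of_int X0 ^ 2 - b'))"
            using hensel[OF alp bep up u1 F0] by blast
          then show ?thesis using qn[of "of_int X0" y] by (intro exI[of _ "Quat (of_int X0) (y * la) lb 0"]) (simp add: algebra_simps)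
        qed
        show ?thesis using iso_not_ram[OF pp _ B(1) fam] by simp
      qed
      then show ?thesis using ram_p by simp
    qed
  qed
qed

end

context mo
begin

lemma pi_exists: "\<exists>x\<in>Om. padic_dvd p 1 (qnorm a b x) \<and> \<not> padic_dvd p 2 (qnorm a b x)"
proof -
  obtain x where x: "padic_dvd p 1 (qnorm a b x)" "\<not> padic_dvd p 2 (qnorm a b x)" using pi0 by blast
  have "inR x" unfolding inR_def using pd_mono[OF pp _ x(1), of 0] by simp
  then obtain s where s: "\<not> p dvd s" "qsmul (of_int s) x \<in> Om" using MAX by blast
  have N: "qnorm a b (qsmul (of_int s) x) = of_int (s^2) * qnorm a b x" by (simp add: qnorm_smul)
  have "padic_dvd p 1 (qnorm a b (qsmul (of_int s) x))" unfolding N using pd_smul[OF pp x(1)] .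
  moreover have "\<not> padic_dvd p 2 (qnorm a b (qsmul (of_int s) x))"
  proof
    assume h: "padic_dvd p 2 (qnorm a b (qsmul (of_int s) x))"
    have sinv: "padic_dvd p 0 (1 / of_int s)" using pd_intro[OF pp s(1), of "1 / of_int s" 0 1] by simp
    have A: "padic_dvd p ((0 + 0) + 2) ((1 / of_int s) * (1 / of_int s) * qnorm a b (qsmul (of_int s) x))"
      by (rule pd_mult[OF pp pd_mult[OF pp sinv sinv] h])
    have eq: "(1 / of_int s) * (1 / of_int s) * qnorm a b (qsmul (of_int s) x) = qnorm a b x"
      unfolding N using s(1) by (auto simp: power2_eq_square)
    have "padic_dvd p 2 (qnorm a b x)" using A unfolding eq by (simp only: add_0)
    then show False using x(2) by simp
  qed
  ultimately show ?thesis using s(2) by blast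
qed

end

definition cos :: "quat set \<Rightarrow> quat \<Rightarrow> quat set" where "cos L x = (\<lambda>y. x + y) ` L"

lemma sum_const_q: "finite A \<Longrightarrow> (\<Sum>c\<in>A. x) = qsmul (of_nat (card A)) x"
proof (induction A rule: finite_induct)
  case empty then show ?case by (simp add: qsmul_0)
next
  case (insert c F) then show ?case by (simp add: qsmul_add2 qsmul_1 add.commute)
qed

context fixes L :: "quat set" assumes L: "is_lattice L"
begin

lemma cos_eq_iff: "cos L x = cos L y \<longleftrightarrow> x - y \<in> L"
proof
  assume "cos L x = cos L y"
  moreover have "x \<in> cos L x" unfolding cos_def using latt_0[OF L] by force
  ultimately have "x \<in> cos L y" by simp
  then obtain l where "l \<in> L" "x = y + l" unfolding cos_def by blast
  then show "x - y \<in> L" by simp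
next
  assume d: "x - y \<in> L"
  have "cos L x \<subseteq> cos L y" if "x - y \<in> L" for x y
  proof
    fix z assume "z \<in> cos L x"
    then obtain l where l: "l \<in> L" "z = x + l" unfolding cos_def by blast
    have "z = y + ((x - y) + l)" using l by simp
    moreover have "(x - y) + l \<in> L" using latt_add[OF L that l(1)] .
    ultimately show "z \<in> cos L y" unfolding cos_def by blast
  qed
  moreover have "y - x \<in> L" using latt_neg[OF L d] by simp
  ultimately show "cos L x = cos L y" using d by blast
qed

lemma index_p_mult:
  assumes addM: "\<And>x y. x \<in> M \<Longrightarrow> y \<in> M \<Longrightarrow> x + y \<in> M"
    and card: "card (cos L ` M) = nat p" and p0: "p > 0" and x: "x \<in> M"
  shows "qsmul (of_int p) x \<in> L"
proof -
  define C where "C = cos L ` M"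
  have fin: "finite C" using card p0 unfolding C_def by (metis card.infinite nat_0_less_mult_iff nat_less_iff of_nat_0 mult_1 zero_less_one not_less_zero less_numeral_extra(3) zero_less_nat_eq)
  define r where "r = (\<lambda>c. SOME y. y \<in> M \<and> c = cos L y)"
  have r: "r c \<in> M \<and> c = cos L (r c)" if "c \<in> C" for c
  proof -
    have "\<exists>y. y \<in> M \<and> c = cos L y" using that unfolding C_def by blast
    then show ?thesis unfolding r_def by (rule someI_ex)
  qed
  define sg where "sg = (\<lambda>c. cos L (x + r c))"
  have sgC: "sg ` C \<subseteq> C" unfolding sg_def C_def using r addM[OF x] C_def by blast
  have inj: "inj_on sg C"
  proof (rule inj_onI)
    fix c1 c2 assume c: "c1 \<in> C" "c2 \<in> C" "sg c1 = sg c2"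
    from c(3) have "(x + r c1) - (x + r c2) \<in> L" unfolding sg_def cos_eq_iff .
    then have "r c1 - r c2 \<in> L" by simp
    then have "cos L (r c1) = cos L (r c2)" unfolding cos_eq_iff .
    then show "c1 = c2" using r[OF c(1)] r[OF c(2)] by simp
  qed
  have bij: "bij_betw sg C C" using endo_inj_surj[OF fin sgC inj] inj by (simp add: bij_betw_def)
  have mem: "x + r c - r (sg c) \<in> L" if c: "c \<in> C" for c
  proof -
    have "sg c \<in> C" using sgC c by blast
    then have "sg c = cos L (r (sg c))" using r by blast
    then have "cos L (x + r c) = cos L (r (sg c))" unfolding sg_def .
    then show ?thesis unfolding cos_eq_iff .
  qed
  have "(\<Sum>c\<in>C. x + r c - r (sg c)) \<in> L" using latt_sum[OF L fin mem] .
  moreover have "(\<Sum>c\<in>C. x + r c - r (sg c)) = (\<Sum>c\<in>C. x) + (\<Sum>c\<in>C. r c) - (\<Sum>c\<in>C. r (sg c))"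
    by (simp add: sum.distrib sum_subtractf)
  moreover have "(\<Sum>c\<in>C. r (sg c)) = (\<Sum>c\<in>C. r c)" using sum.reindex_bij_betw[OF bij] .
  moreover have "(\<Sum>c\<in>C. x) = qsmul (of_int p) x" using sum_const_q[OF fin, of x] card p0 unfolding C_def by simp
  ultimately show ?thesis by simp
qed

lemma index_p_gen:
  assumes pp: "prime p" and smM: "\<And>x k. x \<in> M \<Longrightarrow> qsmul (of_int k) x \<in> M"
    and card: "card (cos L ` M) = nat p" and q: "q \<in> M" "q \<notin> L" "qsmul (of_int p) q \<in> L"
    and x: "x \<in> M"
  shows "\<exists>k::int. x - qsmul (of_int k) q \<in> L"
proof -
  have p0: "p > 0" using pp prime_gt_0_int by blast
  define C where "C = cos L ` M"
  have fin: "finite C" using card p0 unfolding C_def by (metis card.infinite nat_0_less_mult_iff nat_less_iff of_nat_0 mult_1 zero_less_one not_less_zero less_numeral_extra(3) zero_less_nat_eq)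
  define f where "f = (\<lambda>k::int. cos L (qsmul (of_int k) q))"
  define K where "K = {0..<p}"
  have inj: "inj_on f K"
  proof (rule inj_onI)
    fix i j assume ij: "i \<in> K" "j \<in> K" "f i = f j"
    from ij(3) have "qsmul (of_int i) q - qsmul (of_int j) q \<in> L" unfolding f_def cos_eq_iff .
    then have d: "qsmul (of_int (i - j)) q \<in> L" by (simp add: qsmul_diff2)
    show "i = j"
    proof (rule ccontr)
      assume "i \<noteq> j"
      have "\<not> p dvd (i - j)"
      proof
        assume "p dvd (i - j)"
        then have "\<bar>p\<bar> \<le> \<bar>i - j\<bar>" using dvd_imp_le_int \<open>i \<noteq> j\<close> by simp
        then show False using ij(1,2) unfolding K_def by auto
      qed
      then have "coprime (i - j) p" using pp by (simp add: prime_imp_coprime coprime_commute)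
      then obtain u v where uv: "u * (i - j) + v * p = 1" using bezout_int[of "i - j" p] by auto
      have "q = qsmul (of_int (u * (i - j) + v * p)) q" unfolding uv by (simp add: qsmul_1)
      also have "\<dots> = qsmul (of_int u) (qsmul (of_int (i - j)) q) + qsmul (of_int v) (qsmul (of_int p) q)"
        by (simp only: qsmul_add2 qsmul_smul of_int_add of_int_mult)
      also have "\<dots> \<in> L" by (rule latt_add[OF L latt_smul[OF L d] latt_smul[OF L q(3)]])
      finally show False using q(2) by simp
    qed
  qed
  have sub: "f ` K \<subseteq> C" unfolding f_def C_def using smM[OF q(1)] by blast
  have "card (f ` K) = card C" using card_image[OF inj] card unfolding K_def C_def by simp
  then have eq: "f ` K = C" using card_subset_eq[OF fin sub] by simp
  have "cos L x \<in> C" unfolding C_def using x by blast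
  then obtain k where "cos L x = f k" unfolding eq[symmetric] by blast
  then show ?thesis unfolding f_def cos_eq_iff by blast
qed

end

lemma qdisc_add_qof: "qdisc a b (qof r + x) = qdisc a b x"
  by (cases x) (simp add: qdisc_def qof_def algebra_simps power2_eq_square)

context mo
begin

definition PP :: "quat set" where "PP = {u \<in> Om. padic_dvd p 1 (qnorm a b u)}"

lemma Ot_Om: "x \<in> tilde_order a b p Om \<Longrightarrow> x \<in> Om" unfolding tilde_order_def by blast

lemma PP_Ot: assumes u: "u \<in> PP" shows "qof (of_int h) + u \<in> tilde_order a b p Om"
proof -
  have uO: "u \<in> Om" and N1: "padic_dvd p 1 (qnorm a b u)" using u unfolding PP_def by auto
  obtain T where T: "qtr u = of_int T" using ord_tr_int[OF ordO uO] by (auto elim: Ints_cases)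
  obtain NN where NN: "qnorm a b u = of_int NN" using ord_norm_int[OF ordO uO] by (auto elim: Ints_cases)
  have "padic_dvd p 1 (qtr u)" using P_tr[OF N1] .
  then have "p dvd T" using pd_int_iff[OF pp, of 1 T] T by simp
  then obtain T' where T': "T = p * T'" by (auto elim: dvdE)
  have "p dvd NN" using pd_int_iff[OF pp, of 1 NN] N1 NN by simp
  then obtain N' where N': "NN = p * N'" by (auto elim: dvdE)
  have "qdisc a b (qof (of_int h) + u) = qdisc a b u" by (rule qdisc_add_qof)
  also have "\<dots> = of_int p * of_int (T' * T' * p - 4 * N')"
    unfolding qdisc_def T NN T' N' by (simp add: power2_eq_square algebra_simps)
  finally have "qdisc a b (qof (of_int h) + u) = of_int p * of_int (T' * T' * p - 4 * N')" .
  moreover have "qof (of_int h) + u \<in> Om" using ord_add[OF ordO ord_int[OF ordO] uO] .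
  ultimately show ?thesis unfolding tilde_order_def by blast
qed

lemma PP_Ot0: "u \<in> PP \<Longrightarrow> u \<in> tilde_order a b p Om"
  using PP_Ot[of u 0] by (simp add: qof_0)

lemma Ot_dec: assumes x: "x \<in> tilde_order a b p Om" shows "\<exists>h::int. x - qof (of_int h) \<in> PP"
proof -
  have xO: "x \<in> Om" using x by (rule Ot_Om)
  obtain k where k: "qdisc a b x = of_int p * of_int k" using x unfolding tilde_order_def by blast
  obtain T where T: "qtr x = of_int T" using ord_tr_int[OF ordO xO] by (auto elim: Ints_cases)
  define h where "h = T * ((p + 1) div 2)"
  have odd: "odd p" using prime_odd_int[OF pp p2] .
  have h2: "2 * h = T * (p + 1)" unfolding h_def using odd by (auto elim!: oddE)
  define u where "u = x - qof (of_int h)"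
  have uO: "u \<in> Om" unfolding u_def using ord_diff[OF ordO xO ord_int[OF ordO]] .
  have "qtr u = of_int T - 2 * of_int h" unfolding u_def qtr_diff qtr_qof T ..
  also have "(2 * of_int h :: rat) = of_int (2 * h)" by simp
  also have "\<dots> = of_int (T * (p + 1))" by (simp only: h2)
  finally have "qtr u = of_int (T - T * (p + 1))" by simp
  then have tu: "qtr u = - of_int (T * p)" by (simp add: algebra_simps)
  have du: "qdisc a b u = of_int p * of_int k" unfolding u_def qdisc_diff_qof k ..
  have "4 * qnorm a b u = (qtr u)^2 - qdisc a b u" unfolding qdisc_def by simp
  also have "\<dots> = of_int (p^1) * of_int (T * T * p - k)" unfolding tu du by (simp add: power2_eq_square algebra_simps)
  finally have "4 * qnorm a b u = of_int (p^1) * of_int (T * T * p - k)" .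
  then have "qnorm a b u = of_int (p^1) * of_int (T * T * p - k) / of_int 4" by simp
  moreover have "\<not> p dvd 4"
  proof
    assume "p dvd 4"
    then show False using prime_dvd_mult_iff[OF pp, of 2 2] p_ndvd2 by simp
  qed
  ultimately have "padic_dvd p 1 (qnorm a b u)" by (intro pd_intro[OF pp]) 
  then show ?thesis using uO unfolding PP_def u_def by blast
qed

lemma PP_add: "u \<in> PP \<Longrightarrow> w \<in> PP \<Longrightarrow> u + w \<in> PP"
  unfolding PP_def using P_add ord_add[OF ordO] by blast
lemma PP_neg: "u \<in> PP \<Longrightarrow> - u \<in> PP"
  unfolding PP_def using ord_neg[OF ordO] by (simp add: qnorm_neg)
lemma PP_diff: "u \<in> PP \<Longrightarrow> w \<in> PP \<Longrightarrow> u - w \<in> PP"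
  using PP_add[of u "- w"] PP_neg[of w] by simp
lemma PP_smul: assumes "u \<in> PP" shows "qsmul (of_int k) u \<in> PP"
proof -
  have "padic_dvd p 1 (of_int (k^2) * qnorm a b u)" using pd_smul[OF pp] assms unfolding PP_def by blast
  then show ?thesis using assms ord_smul[OF ordO] unfolding PP_def by (simp add: qnorm_smul)
qed
lemma PP_mulL: assumes o: "o' \<in> Om" and u: "u \<in> PP" shows "qmul a b o' u \<in> PP"
proof -
  have "padic_dvd p 0 (qnorm a b o')" using ord_norm_int[OF ordO o] pd_Z[OF pp] by blast
  then have "padic_dvd p (0 + 1) (qnorm a b o' * qnorm a b u)" using pd_mult[OF pp] u unfolding PP_def by blast
  moreover have "qnorm a b (qmul a b o' u) = qnorm a b o' * qnorm a b u" by (rule qnorm_mult)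
  ultimately have "padic_dvd p 1 (qnorm a b (qmul a b o' u))" by simp
  then show ?thesis using ord_mul[OF ordO o] u unfolding PP_def by simp
qed
lemma PP_mulR: assumes o: "o' \<in> Om" and u: "u \<in> PP" shows "qmul a b u o' \<in> PP"
proof -
  have "padic_dvd p 0 (qnorm a b o')" using ord_norm_int[OF ordO o] pd_Z[OF pp] by blast
  then have "padic_dvd p (1 + 0) (qnorm a b u * qnorm a b o')" using pd_mult[OF pp] u unfolding PP_def by blast
  moreover have "qnorm a b (qmul a b u o') = qnorm a b u * qnorm a b o'" by (rule qnorm_mult)
  ultimately have "padic_dvd p 1 (qnorm a b (qmul a b u o'))" by simp
  then show ?thesis using ord_mul[OF ordO _ o] u unfolding PP_def by simp
qed
lemma pOm_PP: assumes o: "o' \<in> Om" shows "qsmul (of_int p) o' \<in> PP"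
proof -
  have "padic_dvd p 0 (qnorm a b o')" using ord_norm_int[OF ordO o] pd_Z[OF pp] by blast
  then have "padic_dvd p (0 + 1) (of_int (p^1) * qnorm a b o')" using pd_shift2[OF pp] by blast
  then have "padic_dvd p 1 (of_int (p^2) * qnorm a b o')" using pd_smul[OF pp, of 1 _ p] by (simp add: power2_eq_square mult.assoc)
  then show ?thesis using ord_smul[OF ordO o] unfolding PP_def by (simp add: qnorm_smul)
qed

lemma Ot_add: assumes x: "x \<in> tilde_order a b p Om" and y: "y \<in> tilde_order a b p Om" shows "x + y \<in> tilde_order a b p Om"
proof -
  obtain h1 where h1: "x - qof (of_int h1) \<in> PP" using Ot_dec[OF x] by blast
  obtain h2 where h2: "y - qof (of_int h2) \<in> PP" using Ot_dec[OF y] by blast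
  have e: "x + y = qof (of_int (h1 + h2)) + ((x - qof (of_int h1)) + (y - qof (of_int h2)))" by (simp add: qof_add algebra_simps)
  show ?thesis by (subst e) (rule PP_Ot[OF PP_add[OF h1 h2]])
qed

lemma Ot_smul: assumes x: "x \<in> tilde_order a b p Om" shows "qsmul (of_int k) x \<in> tilde_order a b p Om"
proof -
  obtain h1 where h1: "x - qof (of_int h1) \<in> PP" using Ot_dec[OF x] by blast
  have e: "qsmul (of_int k) x = qof (of_int (k * h1)) + qsmul (of_int k) (x - qof (of_int h1))" by (simp add: qsmul_diff qsmul_qof)
  show ?thesis by (subst e) (rule PP_Ot[OF PP_smul[OF h1]])
qed

lemma main:
  assumes L: "is_lattice L" and sub: "L \<subseteq> tilde_order a b p Om"
    and idx: "lattice_index (tilde_order a b p Om) L = nat p"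
  shows "is_order a b L \<longleftrightarrow> {qadd (qof_int n) (qsmul (of_int p) x) | n x. x \<in> Om} \<subseteq> L"
proof -
  have card: "card (cos L ` tilde_order a b p Om) = nat p"
    using idx unfolding lattice_index_def cos_def qadd_eq .
  have p0: "p > 0" using p_pos[OF pp] .
  have I1: "qsmul (of_int p) x \<in> L" if "x \<in> tilde_order a b p Om" for x
    using index_p_mult[OF L, of "tilde_order a b p Om" p x] Ot_add card p0 that by blast
  show ?thesis
  proof
    assume ord: "is_order a b L"
    have qofL: "qof (of_int n) \<in> L" for n
      using latt_smul[OF L ord_one[OF ord], of n] by (simp add: qof_smul_one)
    have pL: "qsmul (of_int p) o' \<in> L" if o: "o' \<in> Om" for o'
    proof (rule ccontr)
      define q where "q = qsmul (of_int p) o'"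
      assume qn: "\<not> qsmul (of_int p) o' \<in> L"
      then have qnL: "q \<notin> L" unfolding q_def .
      have qPP: "q \<in> PP" unfolding q_def using pOm_PP[OF o] .
      have qOt: "q \<in> tilde_order a b p Om" using PP_Ot0[OF qPP] .
      have pq: "qsmul (of_int p) q \<in> L" using I1[OF qOt] .
      have gen: "\<exists>k::int. y - qsmul (of_int k) q \<in> L" if "y \<in> tilde_order a b p Om" for y
        using index_p_gen[OF L pp _ card qOt qnL pq that] Ot_smul by blast
      have prodL: "qmul a b u w \<in> L" if u: "u \<in> PP" and w: "w \<in> PP" for u w
      proof -
        obtain k1 where k1: "u - qsmul (of_int k1) q \<in> L" using gen[OF PP_Ot0[OF u]] by blast
        obtain k2 where k2: "w - qsmul (of_int k2) q \<in> L" using gen[OF PP_Ot0[OF w]] by blast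
        define l1 where "l1 = u - qsmul (of_int k1) q"
        define l2 where "l2 = w - qsmul (of_int k2) q"
        have l1P: "l1 \<in> PP" unfolding l1_def using PP_diff[OF u PP_smul[OF qPP]] .
        have l2P: "l2 \<in> PP" unfolding l2_def using PP_diff[OF w PP_smul[OF qPP]] .
        have ue: "u = l1 + qsmul (of_int k1) q" and we: "w = l2 + qsmul (of_int k2) q" unfolding l1_def l2_def by simp_all
        have e: "qmul a b u w = qmul a b l1 l2 + qsmul (of_int k2) (qsmul (of_int p) (qmul a b l1 o'))
            + qsmul (of_int k1) (qsmul (of_int p) (qmul a b o' l2))
            + qsmul (of_int (k1 * k2)) (qsmul (of_int p) (qsmul (of_int p) (qmul a b o' o')))"
          unfolding ue we q_def by (simp add: qmul_add_left qmul_add_right qmul_smul_left qmul_smul_right qsmul_smul qsmul_add algebra_simps)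
        have A1: "qmul a b l1 l2 \<in> L" using ord_mul[OF ord] k1 k2 unfolding l1_def l2_def by blast
        have A2: "qsmul (of_int p) (qmul a b l1 o') \<in> L" using I1[OF PP_Ot0[OF PP_mulR[OF o l1P]]] .
        have A3: "qsmul (of_int p) (qmul a b o' l2) \<in> L" using I1[OF PP_Ot0[OF PP_mulL[OF o l2P]]] .
        have A4: "qsmul (of_int p) (qsmul (of_int p) (qmul a b o' o')) \<in> L"
          using I1[OF PP_Ot0[OF pOm_PP[OF ord_mul[OF ordO o o]]]] .
        show ?thesis unfolding e by (rule latt_add[OF L latt_add[OF L latt_add[OF L A1 latt_smul[OF L A2]] latt_smul[OF L A3]] latt_smul[OF L A4]])
      qed
      obtain pi where pi: "pi \<in> Om" "padic_dvd p 1 (qnorm a b pi)" "\<not> padic_dvd p 2 (qnorm a b pi)" using pi_exists by blast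
      obtain NN where NN: "qnorm a b pi = of_int NN" using ord_norm_int[OF ordO pi(1)] by (auto elim: Ints_cases)
      have "p dvd NN" using pd_int_iff[OF pp, of 1 NN] pi(2) NN by simp
      then obtain m where m: "NN = p * m" by (auto elim: dvdE)
      have mn: "\<not> p dvd m"
      proof
        assume "p dvd m"
        then have "p^2 dvd NN" unfolding m by (simp add: power2_eq_square mult_dvd_mono)
        then show False using pd_int_iff[OF pp, of 2 NN] pi(3) NN by simp
      qed
      have piP: "pi \<in> PP" unfolding PP_def using pi by blast
      have wP: "qmul a b (qconj pi) o' \<in> PP" using PP_mulR[OF o] piP ord_conj[OF ordO pi(1)] pi(2)
        unfolding PP_def by (simp add: qnorm_conj)
      have "qmul a b pi (qmul a b (qconj pi) o') \<in> L" using prodL[OF piP wP] .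
      moreover have "qmul a b pi (qmul a b (qconj pi) o') = qsmul (of_int m) q"
        unfolding qmul_assoc[symmetric] qmul_conj qmul_qof_left NN m q_def by (simp add: qsmul_smul mult.commute)
      ultimately have mq: "qsmul (of_int m) q \<in> L" by simp
      have "coprime m p" using prime_imp_coprime[OF pp mn] by (simp add: coprime_commute)
      then obtain uu vv where uv: "uu * m + vv * p = 1" using bezout_int[of m p] by auto
      have "q = qsmul (of_int (uu * m + vv * p)) q" unfolding uv by (simp add: qsmul_1)
      also have "\<dots> = qsmul (of_int uu) (qsmul (of_int m) q) + qsmul (of_int vv) (qsmul (of_int p) q)"
        by (simp only: qsmul_add2 qsmul_smul of_int_add of_int_mult)
      also have "\<dots> \<in> L" by (rule latt_add[OF L latt_smul[OF L mq] latt_smul[OF L pq]])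
      finally show False using qnL by simp
    qed
    show "{qadd (qof_int n) (qsmul (of_int p) x) | n x. x \<in> Om} \<subseteq> L"
    proof
      fix z assume "z \<in> {qadd (qof_int n) (qsmul (of_int p) x) | n x. x \<in> Om}"
      then obtain n x where z: "z = qadd (qof_int n) (qsmul (of_int p) x)" "x \<in> Om" by blast
      show "z \<in> L" unfolding z(1) qadd_eq qof_int_eq using latt_add[OF L qofL pL[OF z(2)]] .
    qed
  next
    assume Z: "{qadd (qof_int n) (qsmul (of_int p) x) | n x. x \<in> Om} \<subseteq> L"
    have qofL: "qof (of_int n) \<in> L" for n
    proof -
      have "qadd (qof_int n) (qsmul (of_int p) 0) \<in> L" using Z ord_0[OF ordO] by blast
      then show ?thesis by (simp add: qadd_eq qof_int_eq qsmul_zero)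
    qed
    have pL: "qsmul (of_int p) o' \<in> L" if "o' \<in> Om" for o'
    proof -
      have "qadd (qof_int 0) (qsmul (of_int p) o') \<in> L" using Z that by blast
      then show ?thesis by (simp add: qadd_eq qof_int_eq qof_0)
    qed
    have one: "qone \<in> L" using qofL[of 1] by (simp add: qone_eq)
    have mul: "qmul a b x y \<in> L" if x: "x \<in> L" and y: "y \<in> L" for x y
    proof -
      obtain hx where hx: "x - qof (of_int hx) \<in> PP" using Ot_dec sub x by blast
      obtain hy where hy: "y - qof (of_int hy) \<in> PP" using Ot_dec sub y by blast
      define ux where "ux = x - qof (of_int hx)"
      define uy where "uy = y - qof (of_int hy)"
      have uxL: "ux \<in> L" unfolding ux_def using latt_diff[OF L x qofL] .
      have uyL: "uy \<in> L" unfolding uy_def using latt_diff[OF L y qofL] .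
      obtain oo where oo: "oo \<in> Om" "qmul a b ux uy = qsmul (of_int p) oo"
        using F_sq[of ux uy] hx hy unfolding ux_def uy_def PP_def by blast
      have e: "qmul a b x y = qmul a b ux uy + qsmul (of_int hy) ux + qsmul (of_int hx) uy + qof (of_int (hx * hy))"
      proof -
        have xe: "x = ux + qof (of_int hx)" and ye: "y = uy + qof (of_int hy)" unfolding ux_def uy_def by simp_all
        show ?thesis unfolding xe ye
          by (simp add: qmul_add_left qmul_add_right qmul_qof_left qmul_qof_right qsmul_qof qsmul_add algebra_simps)
      qed
      show ?thesis unfolding e oo(2)
        by (rule latt_add[OF L latt_add[OF L latt_add[OF L pL[OF oo(1)] latt_smul[OF L uxL]] latt_smul[OF L uyL]] qofL])
    qed
    show "is_order a b L" unfolding is_order_def using L one mul by blast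
  qed
qed

end

theorem proposition9:
  fixes p :: int and a b :: rat and Om L :: "quat set"
  assumes "prime p" and "p > 2"
    and "ramified_exactly_at a b p"
    and "is_maximal_order a b Om"
    and "is_lattice L"
    and "L \<subseteq> tilde_order a b p Om"
    and "lattice_index (tilde_order a b p Om) L = nat p"
  shows "is_order a b L \<longleftrightarrow>
           {qadd (qof_int n) (qsmul (of_int p) x) | n x. x \<in> Om} \<subseteq> L"
proof -
  interpret mo p a b Om by unfold_locales (use assms in auto)
  show ?thesis by (rule main[OF assms(5,6,7)])
qed

end
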